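(* Let $A:\mathbb{R}^n\to\mathbb{R}^n$ be a linear operator that is generalized strictly sign-regular (GSSR) with respect to a totally positive structure $\{K_1,\ldots,K_n\}$. Then for every $j=1,\ldots,n$ the interior of $T(K_j)$ is nonempty and $$A\big(T(K_j)\setminus\{0\}\big)\subseteq\operatorname{int}(T(K_j)).$$
   Context: A proper cone in a finite-dimensional real space is a closed convex cone that is pointed ($K\cap(-K)=\{0\}$) and solid ($\operatorname{int}K\ne\emptyset$). $\wedge^j\mathbb{R}^n$ is the $j$th exterior power of $\mathbb{R}^n$, and for a linear operator $A$ on $\mathbb{R}^n$, $\wedge^jA$ is the operator on $\wedge^j\mathbb{R}^n$ with $(\wedge^jA)(x_1\wedge\cdots\wedge x_j)=Ax_1\wedge\cdots\wedge Ax_j$ ($\wedge^1A=A$). A linear operator $B$ is $K$-positive if $B(K\setminus\{0\})\subseteq\operatorname{int}(K)$. A totally positive structure on $\mathbb{R}^n$ is a family $\{K_1,\ldots,K_n\}$ with $K_j\subset\wedge^j\mathbb{R}^n$ a proper cone. $A$ is GSSR with respect to it if there are $\epsilon_1,\ldots,\epsilon_n\in\{1,-1\}$ such that $\epsilon_j\wedge^jA$ is $K_j$-positive for every $j=1,\ldots,n$. Define $T(K_1)=K_1\cup(-K_1)$, and for $j\ge2$ let $T(K_j)$ be the closure of the set of all $x_1\in\mathbb{R}^n$ for which there exist $x_2,\ldots,x_j\in\mathbb{R}^n$ with $x_1\wedge x_2\wedge\cdots\wedge x_j\in\operatorname{int}(K_j)\cup\operatorname{int}(-K_j)$. *)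

theory Defs
  imports "HOL-Analysis.Analysis"
begin

text \<open>
  The ambient space is R^n = real^'n with n = CARD('n);
  the index type is linearly ordered so that j-subsets I can be listed increasingly.
  The exterior power \<wedge>^j R^n is modelled as the subspace
  ext_space j of real^('n set) consisting of vectors supported on the j-subsets of 'n,
  the coordinate at I being the coefficient of the basis vector e_{i1} \<wedge> ... \<wedge> e_{ij}
  (i1 < ... < ij the elements of I).
\<close>

definition ext_space :: "nat \<Rightarrow> (real^('n::{finite,linorder} set)) set" where
  "ext_space j = {v. \<forall>I. card I \<noteq> j \<longrightarrow> v $ I = 0}"

text \<open>Coordinates of x_1 \<wedge> ... \<wedge> x_j: the j\<times>j minors (Leibniz formula).\<close>
definition wedge :: "(real^'n::{finite,linorder}) list \<Rightarrow> real^('n set)" where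
  "wedge xs = (\<chi> I. if card I = length xs then
      (let rows = sorted_list_of_set I in
        \<Sum>p | p permutes {..<length xs}.
           of_int (sign p) * (\<Prod>i<length xs. (xs ! i) $ (rows ! p i)))
     else 0)"

text \<open>The compound operator \<wedge>^j A, given by the j-th compound matrix of A:
  its (I,J) entry is the I-coordinate of A e_{J1} \<wedge> ... \<wedge> A e_{Jj}.\<close>
definition compound :: "nat \<Rightarrow> ((real,'n::{finite,linorder}) vec, 'n) vec \<Rightarrow> real^('n set) \<Rightarrow> real^('n set)" where
  "compound j A v = (\<chi> I. if card I = j then
      (\<Sum>J\<in>{J. card J = j}. wedge (map (\<lambda>k. column k A) (sorted_list_of_set J)) $ I * v $ J)
     else 0)"

definition ext_interior :: "nat \<Rightarrow> (real^('n::{finite,linorder} set)) set \<Rightarrow> (real^('n set)) set" where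
  "ext_interior j S = (top_of_set (ext_space j)) interior_of S"

definition proper_cone :: "nat \<Rightarrow> (real^('n::{finite,linorder} set)) set \<Rightarrow> bool" where
  "proper_cone j K \<longleftrightarrow> K \<subseteq> ext_space j \<and> closed K \<and> convex K \<and> cone K
     \<and> K \<inter> uminus ` K = {0} \<and> ext_interior j K \<noteq> {}"

definition K_positive :: "nat \<Rightarrow> (real^('n::{finite,linorder} set)) set \<Rightarrow> (real^('n set) \<Rightarrow> real^('n set)) \<Rightarrow> bool" where
  "K_positive j K B \<longleftrightarrow> B ` (K - {0}) \<subseteq> ext_interior j K"

definition totally_positive_structure :: "(nat \<Rightarrow> (real^('n::{finite,linorder} set)) set) \<Rightarrow> bool" where
  "totally_positive_structure K \<longleftrightarrow> (\<forall>j\<in>{1..CARD('n)}. proper_cone j (K j))"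

definition GSSR :: "((real,'n::{finite,linorder}) vec, 'n) vec \<Rightarrow> (nat \<Rightarrow> (real^('n set)) set) \<Rightarrow> bool" where
  "GSSR A K \<longleftrightarrow> (\<exists>\<epsilon>::nat \<Rightarrow> real. \<forall>j\<in>{1..CARD('n)}. \<epsilon> j \<in> {1, -1} \<and>
      K_positive j (K j) (\<lambda>v. \<epsilon> j *\<^sub>R compound j A v))"

text \<open>T(K_j) \<subseteq> R^n; for j = 1 we use the identification of \<wedge>^1 R^n with R^n via x \<mapsto> wedge [x].\<close>
definition T_cone :: "(nat \<Rightarrow> (real^('n::{finite,linorder} set)) set) \<Rightarrow> nat \<Rightarrow> (real,'n) vec set" where
  "T_cone K j = (if j = 1 then {x. wedge [x] \<in> K 1 \<union> uminus ` K 1}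
     else closure {x. \<exists>xs. length xs = j - 1 \<and>
        wedge (x # xs) \<in> ext_interior j (K j) \<union> ext_interior j (uminus ` K j)})"

end

theory Submission
  imports Defs
begin

definition rint :: "'a::euclidean_space set \<Rightarrow> 'a set \<Rightarrow> 'a set" where
  "rint E S = (top_of_set E) interior_of S"

lemma rint_iff:
  "x \<in> rint E S \<longleftrightarrow> x \<in> E \<and> (\<exists>e>0. \<forall>y\<in>E. dist y x < e \<longrightarrow> y \<in> S)"
proof
  assume "x \<in> rint E S"
  then obtain T where T: "openin (top_of_set E) T" "x \<in> T" "T \<subseteq> S"
    unfolding rint_def interior_of_def by auto
  then have "T \<subseteq> E" "\<exists>e>0. \<forall>y\<in>E. dist y x < e \<longrightarrow> y \<in> T"
    unfolding openin_euclidean_subtopology_iff by auto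
  then show "x \<in> E \<and> (\<exists>e>0. \<forall>y\<in>E. dist y x < e \<longrightarrow> y \<in> S)" using T by blast
next
  assume "x \<in> E \<and> (\<exists>e>0. \<forall>y\<in>E. dist y x < e \<longrightarrow> y \<in> S)"
  then obtain e where x: "x \<in> E" and e: "e > 0" "\<forall>y\<in>E. dist y x < e \<longrightarrow> y \<in> S" by blast
  have "openin (top_of_set E) (E \<inter> ball x e)" by (rule openin_open_Int) simp
  moreover have "x \<in> E \<inter> ball x e" using x e by simp
  moreover have "E \<inter> ball x e \<subseteq> S" using e by (auto simp: dist_commute)
  ultimately show "x \<in> rint E S" unfolding rint_def interior_of_def by blast
qed

lemma rint_subset: "rint E S \<subseteq> S"
  unfolding rint_def by (rule interior_of_subset)

lemma rint_subset_E: "rint E S \<subseteq> E"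
  using rint_iff by blast

lemma rint_open:
  assumes "x \<in> rint E S"
  shows "\<exists>e>0. \<forall>y\<in>E. dist y x < e \<longrightarrow> y \<in> rint E S"
proof -
  obtain e where x: "x \<in> E" and e: "e > 0" "\<forall>y\<in>E. dist y x < e \<longrightarrow> y \<in> S"
    using assms rint_iff by blast
  have "\<forall>y\<in>E. dist y x < e/2 \<longrightarrow> y \<in> rint E S"
  proof (intro ballI impI)
    fix y assume y: "y \<in> E" "dist y x < e/2"
    have "\<forall>z\<in>E. dist z y < e/2 \<longrightarrow> z \<in> S"
      using e y by (metis dist_triangle_half_l dist_commute)
    then show "y \<in> rint E S" using y e rint_iff[of y E S] by (metis half_gt_zero)
  qed
  then show ?thesis using e by (intro exI[of _ "e/2"]) auto
qed

lemma rint_neg: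
  assumes "subspace E"
  shows "rint E (uminus ` S) = uminus ` rint E S"
proof -
  have neg: "x \<in> rint E S \<Longrightarrow> - x \<in> rint E (uminus ` S)" for x S
  proof -
    assume "x \<in> rint E S"
    then obtain e where x: "x \<in> E" and e: "e > 0" "\<forall>y\<in>E. dist y x < e \<longrightarrow> y \<in> S"
      using rint_iff by blast
    have "\<forall>y\<in>E. dist y (-x) < e \<longrightarrow> y \<in> uminus ` S"
    proof (intro ballI impI)
      fix y assume "y \<in> E" "dist y (-x) < e"
      then have "-y \<in> E" using assms subspace_neg by blast
      moreover have "dist (-y) x = dist y (-x)"
        by (metis dist_minus minus_minus)
      ultimately have "-y \<in> E" "dist (-y) x < e" using \<open>dist y (-x) < e\<close> by auto
      then have "-y \<in> S" using e by blast
      then show "y \<in> uminus ` S" by (metis image_eqI minus_minus)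
    qed
    then show "- x \<in> rint E (uminus ` S)" using rint_iff x e assms subspace_neg by blast
  qed
  show ?thesis
  proof
    show "rint E (uminus ` S) \<subseteq> uminus ` rint E S"
    proof
      fix x assume "x \<in> rint E (uminus ` S)"
      then have "-x \<in> rint E (uminus ` uminus ` S)" by (rule neg)
      moreover have "uminus ` uminus ` S = S" unfolding image_image by simp
      ultimately have "-x \<in> rint E S" by simp
      then show "x \<in> uminus ` rint E S" by (metis image_eqI minus_minus)
    qed
    show "uminus ` rint E S \<subseteq> rint E (uminus ` S)" using neg by blast
  qed
qed

lemma cone_add:
  assumes "cone K" "convex K" "x \<in> K" "y \<in> K"
  shows "x + y \<in> K"
proof -
  have "(1/2) *\<^sub>R x + (1/2) *\<^sub>R y \<in> K" using assms by (intro convexD) auto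
  then have "2 *\<^sub>R ((1/2) *\<^sub>R x + (1/2) *\<^sub>R y) \<in> K" using assms(1) unfolding cone_def by auto
  then show ?thesis by (simp add: algebra_simps)
qed

lemma rint_scale:
  assumes "subspace E" "cone K" "x \<in> rint E K" "c > 0"
  shows "c *\<^sub>R x \<in> rint E K"
proof -
  obtain e where x: "x \<in> E" and e: "e > 0" "\<forall>y\<in>E. dist y x < e \<longrightarrow> y \<in> K"
    using assms rint_iff by blast
  have "\<forall>y\<in>E. dist y (c *\<^sub>R x) < c * e \<longrightarrow> y \<in> K"
  proof (intro ballI impI)
    fix y assume y: "y \<in> E" "dist y (c *\<^sub>R x) < c * e"
    have "(1/c) *\<^sub>R y \<in> E" using y assms subspace_scale by blast
    moreover have "dist ((1/c) *\<^sub>R y) x < e"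
    proof -
      have "(1/c) *\<^sub>R y - x = (1/c) *\<^sub>R (y - c *\<^sub>R x)" using assms(4) by (simp add: algebra_simps)
      then have "dist ((1/c) *\<^sub>R y) x = (1/c) * dist y (c *\<^sub>R x)"
        using assms(4) by (simp add: dist_norm)
      also have "\<dots> < (1/c) * (c * e)" using y assms(4) by (intro mult_strict_left_mono) auto
      finally show ?thesis using assms(4) by simp
    qed
    ultimately have "(1/c) *\<^sub>R y \<in> K" using e by blast
    then have "c *\<^sub>R ((1/c) *\<^sub>R y) \<in> K" using assms(2,4) unfolding cone_def by (meson less_imp_le)
    then show "y \<in> K" using assms(4) by simp
  qed
  moreover have "c *\<^sub>R x \<in> E" using x assms subspace_scale by blast
  ultimately show ?thesis using rint_iff assms e by (metis mult_pos_pos)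
qed

lemma rint_add:
  assumes "subspace E" "cone K" "convex K" "x \<in> rint E K" "y \<in> K" "K \<subseteq> E"
  shows "x + y \<in> rint E K"
proof -
  obtain e where x: "x \<in> E" and e: "e > 0" "\<forall>y\<in>E. dist y x < e \<longrightarrow> y \<in> K"
    using assms rint_iff by blast
  have yE: "y \<in> E" using assms by blast
  have "\<forall>z\<in>E. dist z (x + y) < e \<longrightarrow> z \<in> K"
  proof (intro ballI impI)
    fix z assume z: "z \<in> E" "dist z (x + y) < e"
    have "z - y \<in> E" using z yE assms(1) subspace_diff by blast
    moreover have "dist (z - y) x < e" using z by (simp add: dist_norm algebra_simps)
    ultimately have "z - y \<in> K" using e by blast
    then have "(z - y) + y \<in> K" using cone_add assms by blast
    then show "z \<in> K" by simp
  qed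
  moreover have "x + y \<in> E" using x yE assms(1) subspace_add by blast
  ultimately show ?thesis using rint_iff e by blast
qed

lemma cone_0: "cone K \<Longrightarrow> K \<noteq> {} \<Longrightarrow> 0 \<in> K"
  unfolding cone_def by (metis all_not_in_conv scaleR_zero_left order_refl)

lemma rint_absorb:
  assumes "subspace E" "cone K" "u \<in> rint E K" "w \<in> E"
  shows "\<exists>t>0. w + t *\<^sub>R u \<in> K"
proof -
  obtain e where u: "u \<in> E" and e: "e > 0" "\<forall>y\<in>E. dist y u < e \<longrightarrow> y \<in> K"
    using assms rint_iff by blast
  define t where "t = 2 * (norm w + 1) / e"
  have t0: "0 < 2 * (norm w + 1)" using norm_ge_zero[of w] by (smt (verit))
  have t: "t > 0" unfolding t_def by (rule divide_pos_pos[OF t0 e(1)])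
  have "u + (1/t) *\<^sub>R w \<in> E" using assms u subspace_add subspace_scale by blast
  moreover have "dist (u + (1/t) *\<^sub>R w) u < e"
  proof -
    have "dist (u + (1/t) *\<^sub>R w) u = norm w / t" using t by (simp add: dist_norm)
    also have "\<dots> = norm w * e / (2 * (norm w + 1))" using e by (simp add: t_def)
    also have "\<dots> < e"
    proof -
      have "norm w * e < e * (2 * (norm w + 1))" using e norm_ge_zero[of w] by (simp add: algebra_simps add_nonneg_pos)
      then show ?thesis using t0 by (simp add: divide_less_eq)
    qed
    finally show ?thesis .
  qed
  ultimately have "u + (1/t) *\<^sub>R w \<in> K" using e by blast
  then have "t *\<^sub>R (u + (1/t) *\<^sub>R w) \<in> K" using assms(2) t unfolding cone_def by auto
  then have "w + t *\<^sub>R u \<in> K" using t by (simp add: algebra_simps)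
  then show ?thesis using t by blast
qed

lemma zero_notin_rint:
  assumes "K \<inter> uminus ` K = {0}" "cone K" "v \<in> E" "v \<noteq> 0" "subspace E"
  shows "0 \<notin> rint E K"
proof
  assume "0 \<in> rint E K"
  then obtain e where e: "e > 0" "\<forall>y\<in>E. dist y 0 < e \<longrightarrow> y \<in> K"
    using rint_iff by blast
  define y where "y = (e / (2 * norm v)) *\<^sub>R v"
  have ny: "norm y = e / 2" using assms e by (simp add: y_def)
  have "y \<in> E" "-y \<in> E" using assms subspace_scale subspace_neg unfolding y_def by blast+
  then have "y \<in> K" "-y \<in> K" using e ny by auto
  then have "y \<in> K \<inter> uminus ` K" by (metis IntI image_eqI minus_minus)
  then have "y = 0" using assms by blast
  then show False using ny e by simp
qed


lemma cone_sum:
  assumes "cone K" "convex K" "K \<noteq> {}" "finite S" "\<forall>x\<in>S. f x \<in> K"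
  shows "sum f S \<in> K"
  using assms(4,5)
proof (induction S rule: finite_induct)
  case empty then show ?case using cone_0[OF assms(1,3)] by simp
next
  case (insert x F) then show ?case using cone_add[OF assms(1,2)] by simp
qed

locale pcone =
  fixes E :: "'a::euclidean_space set" and K :: "'a set" and M :: "'a \<Rightarrow> 'a"
  assumes sub: "subspace E" and KE: "K \<subseteq> E" and clK: "closed K" and cvK: "convex K" and cnK: "cone K"
    and pt: "K \<inter> uminus ` K = {0}" and ne: "rint E K \<noteq> {}" and Enz: "E \<noteq> {0}"
    and lin: "linear M" and ME: "M ` E \<subseteq> E" and pos: "M ` (K - {0}) \<subseteq> rint E K"
begin

lemma K_ne: "K \<noteq> {}" using ne rint_subset by blast

lemma zeroK: "0 \<in> K" using cone_0[OF cnK K_ne] .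

lemma zero_notin: "0 \<notin> rint E K"
proof -
  obtain v where "v \<in> E" "v \<noteq> 0" using Enz sub subspace_0 by blast
  then show ?thesis using zero_notin_rint[OF pt cnK _ _ sub] by blast
qed

lemma MK: "v \<in> K \<Longrightarrow> M v \<in> K"
  using pos rint_subset zeroK linear_0[OF lin] by (cases "v = 0") auto

lemma Kscale: "v \<in> K \<Longrightarrow> c \<ge> 0 \<Longrightarrow> c *\<^sub>R v \<in> K"
  using cnK unfolding cone_def by blast

lemma Kadd: "v \<in> K \<Longrightarrow> w \<in> K \<Longrightarrow> v + w \<in> K"
  using cone_add[OF cnK cvK] .

lemma pointed: "v \<in> K \<Longrightarrow> -v \<in> K \<Longrightarrow> v = 0"
proof -
  assume "v \<in> K" "-v \<in> K"
  then have "v \<in> uminus ` K" by (metis image_eqI minus_minus)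
  then show "v = 0" using pt \<open>v \<in> K\<close> by blast
qed

lemma funct: "\<exists>a \<gamma>. \<gamma> > 0 \<and> (\<forall>v\<in>K. \<gamma> * norm v \<le> inner a v)"
proof -
  define S1 where "S1 = K \<inter> sphere 0 1"
  define C where "C = convex hull S1"
  have "compact S1" unfolding S1_def by (intro closed_Int_compact clK compact_sphere)
  then have "compact C" unfolding C_def by (rule compact_convex_hull)
  have "0 \<notin> C"
  proof
    assume "0 \<in> C"
    then obtain S u where S: "finite S" "S \<subseteq> S1" "\<forall>x\<in>S. 0 \<le> u x" "sum u S = 1" "(\<Sum>v\<in>S. u v *\<^sub>R v) = 0"
      unfolding C_def convex_hull_explicit by blast
    obtain t0 where t0: "t0 \<in> S" "u t0 > 0"
    proof (rule ccontr)
      assume "\<not> thesis"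
      then have "\<forall>x\<in>S. u x = 0" using S(3) that by force
      then show False using S(4) by simp
    qed
    have "(\<Sum>v\<in>S. u v *\<^sub>R v) = u t0 *\<^sub>R t0 + (\<Sum>v\<in>S - {t0}. u v *\<^sub>R v)"
      using S(1) t0(1) by (simp add: sum.remove)
    then have eq: "u t0 *\<^sub>R t0 = - (\<Sum>v\<in>S - {t0}. u v *\<^sub>R v)" using S(5) by (simp add: eq_neg_iff_add_eq_0)
    have "(\<Sum>v\<in>S - {t0}. u v *\<^sub>R v) \<in> K"
      using S unfolding S1_def by (intro cone_sum[OF cnK cvK K_ne]) (auto intro: Kscale)
    moreover have "u t0 *\<^sub>R t0 \<in> K" using S t0 unfolding S1_def by (auto intro: Kscale)
    ultimately have "u t0 *\<^sub>R t0 = 0" using eq pointed by (metis minus_minus)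
    moreover have "norm t0 = 1" using S t0 unfolding S1_def by auto
    ultimately show False using t0 by auto
  qed
  obtain a b where ab: "a \<noteq> 0" "0 < b" "\<forall>x\<in>C. inner a x > b"
    using separating_hyperplane_closed_0[OF convex_convex_hull[of S1] compact_imp_closed[OF \<open>compact C\<close>[unfolded C_def]]]
      \<open>0 \<notin> C\<close> unfolding C_def by blast
  have "\<forall>v\<in>K. b * norm v \<le> inner a v"
  proof
    fix v assume v: "v \<in> K"
    show "b * norm v \<le> inner a v"
    proof (cases "v = 0")
      case False
      have "(1 / norm v) *\<^sub>R v \<in> S1" using v False unfolding S1_def by (auto intro: Kscale)
      then have "(1 / norm v) *\<^sub>R v \<in> C" unfolding C_def by (rule hull_inc)
      then have "inner a ((1 / norm v) *\<^sub>R v) > b" using ab by blast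
      then have "inner a v / norm v > b" by simp
      then show ?thesis using False by (simp add: pos_less_divide_eq mult.commute)
    qed simp
  qed
  then show ?thesis using ab by blast
qed


lemma M_cont: "continuous_on S M"
  using lin by (simp add: linear_continuous_on linear_conv_bounded_linear)

lemma perron: "\<exists>u \<rho>. u \<in> rint E K \<and> \<rho> > 0 \<and> M u = \<rho> *\<^sub>R u"
proof -
  obtain a \<gamma> where g: "\<gamma> > 0" "\<forall>v\<in>K. \<gamma> * norm v \<le> inner a v" using funct by blast
  have apos: "inner a v > 0" if "v \<in> K" "v \<noteq> 0" for v
  proof -
    have "\<gamma> * norm v > 0" using g that by simp
    then show ?thesis using g that by (meson less_le_trans)
  qed
  define Bs where "Bs = {v\<in>K. inner a v = 1}"
  have "closed Bs"
  proof -
    have "Bs = K \<inter> {v. inner a v = 1}" unfolding Bs_def by auto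
    moreover have "closed {v. inner a v = 1}" by (rule closed_hyperplane)
    ultimately show ?thesis using clK by auto
  qed
  moreover have "bounded Bs"
  proof -
    have "\<forall>v\<in>Bs. norm v \<le> 1 / \<gamma>"
    proof
      fix v assume "v \<in> Bs"
      then have "\<gamma> * norm v \<le> 1" using g unfolding Bs_def by auto
      then show "norm v \<le> 1 / \<gamma>" using g by (simp add: field_simps)
    qed
    then show ?thesis unfolding bounded_iff by blast
  qed
  ultimately have cB: "compact Bs" by (simp add: compact_eq_bounded_closed)
  have vB: "convex Bs"
  proof -
    have "Bs = K \<inter> {v. inner a v = 1}" unfolding Bs_def by auto
    then show ?thesis using cvK convex_hyperplane convex_Int by metis
  qed
  obtain w where w: "w \<in> rint E K" using ne by blast
  have wK: "w \<in> K" "w \<noteq> 0" using w rint_subset zero_notin by auto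
  have "(1 / inner a w) *\<^sub>R w \<in> Bs"
    using wK apos[OF wK] unfolding Bs_def by (auto intro: Kscale)
  then have neB: "Bs \<noteq> {}" by blast
  have Mpos: "M v \<in> rint E K" "M v \<in> K" "M v \<noteq> 0" "inner a (M v) > 0" if "v \<in> Bs" for v
  proof -
    have "v \<noteq> 0" "v \<in> K" using that unfolding Bs_def by auto
    then show "M v \<in> rint E K" using pos by blast
    then show "M v \<in> K" "M v \<noteq> 0" using rint_subset zero_notin by auto
    then show "inner a (M v) > 0" using apos by blast
  qed
  define f where "f v = (1 / inner a (M v)) *\<^sub>R M v" for v
  have cf: "continuous_on Bs f"
    unfolding f_def using Mpos(4)
    by (intro continuous_intros M_cont) (metis less_irrefl)
  have fB: "f \<in> Bs \<rightarrow> Bs"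
  proof
    fix v assume v: "v \<in> Bs"
    show "f v \<in> Bs" unfolding f_def Bs_def using Mpos[OF v] by (auto intro: Kscale)
  qed
  obtain u where u: "u \<in> Bs" "f u = u" using brouwer[OF cB vB neB cf fB] by blast
  define \<rho> where "\<rho> = inner a (M u)"
  have \<rho>: "\<rho> > 0" using Mpos(4)[OF u(1)] unfolding \<rho>_def .
  have Mu: "M u = \<rho> *\<^sub>R u"
  proof -
    have "\<rho> *\<^sub>R u = \<rho> *\<^sub>R f u" using u by simp
    also have "\<dots> = M u" unfolding f_def \<rho>_def using \<rho> unfolding \<rho>_def by simp
    finally show ?thesis by simp
  qed
  have "(1/\<rho>) *\<^sub>R M u \<in> rint E K" using rint_scale[OF sub cnK Mpos(1)[OF u(1)]] \<rho> by simp
  then have "u \<in> rint E K" using Mu \<rho> by simp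
  then show ?thesis using \<rho> Mu by blast
qed

end

locale pcone_u = pcone +
  fixes u :: "'a::euclidean_space" and \<rho> :: real
  assumes urint: "u \<in> rint E K" and rho: "\<rho> > 0" and Mu: "M u = \<rho> *\<^sub>R u"
begin

definition N where "N v = (1/\<rho>) *\<^sub>R M v"

lemma linN: "linear N"
proof -
  interpret l: linear M by (rule lin)
  show ?thesis by (rule linearI) (simp_all add: N_def l.add l.scale algebra_simps)
qed

lemma Nu: "N u = u" using Mu rho by (simp add: N_def)

lemma uK: "u \<in> K" "u \<noteq> 0" "u \<in> E" using urint rint_subset zero_notin rint_subset_E by blast+

lemma NE: "v \<in> E \<Longrightarrow> N v \<in> E" using ME sub subspace_scale unfolding N_def by blast

lemma NK: "v \<in> K \<Longrightarrow> N v \<in> K" using MK Kscale rho unfolding N_def by simp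

lemma Npos: "v \<in> K \<Longrightarrow> v \<noteq> 0 \<Longrightarrow> N v \<in> rint E K"
  using pos rint_scale[OF sub cnK] rho unfolding N_def by auto

lemma linNm: "linear (N^^m)"
proof (induction m)
  case (Suc m)
  have "N^^Suc m = N \<circ> (N^^m)" by simp
  then show ?case using linear_compose[OF Suc linN] by metis
qed (simp add: linear_id id_def[symmetric])

lemma Nmu: "(N^^m) u = u" by (induction m) (simp_all add: Nu)

lemma NmE: "v \<in> E \<Longrightarrow> (N^^m) v \<in> E" by (induction m) (simp_all add: NE)

lemma NmK: "v \<in> K \<Longrightarrow> (N^^m) v \<in> K" by (induction m) (simp_all add: NK)

lemma order_le:
  assumes "z - \<alpha> *\<^sub>R u \<in> K" "\<beta> *\<^sub>R u - z \<in> K"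
  shows "\<alpha> \<le> \<beta>"
proof (rule ccontr)
  assume a: "\<not> \<alpha> \<le> \<beta>"
  have "(\<beta> *\<^sub>R u - z) + (z - \<alpha> *\<^sub>R u) \<in> K" using Kadd[OF assms(2) assms(1)] .
  then have 1: "(\<beta> - \<alpha>) *\<^sub>R u \<in> K" by (simp add: algebra_simps)
  have 2: "(\<alpha> - \<beta>) *\<^sub>R u \<in> K" using Kscale[OF uK(1)] a by simp
  have "- ((\<beta> - \<alpha>) *\<^sub>R u) = (\<alpha> - \<beta>) *\<^sub>R u" by (simp add: algebra_simps)
  then have "(\<beta> - \<alpha>) *\<^sub>R u = 0" using pointed[OF 1] 2 by simp
  then show False using a uK(2) by simp
qed

lemma interval_bound:
  obtains C where "C > 0" "\<And>v s. v \<in> K \<Longrightarrow> s *\<^sub>R u - v \<in> K \<Longrightarrow> norm v \<le> C * s"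
proof -
  obtain a \<gamma> where g: "\<gamma> > 0" "\<forall>v\<in>K. \<gamma> * norm v \<le> inner a v" using funct by blast
  have au: "inner a u > 0"
  proof -
    have "\<gamma> * norm u > 0" using g uK by simp
    then show ?thesis using g uK by (meson less_le_trans)
  qed
  have "norm v \<le> (inner a u / \<gamma>) * s" if "v \<in> K" "s *\<^sub>R u - v \<in> K" for v s
  proof -
    have "0 \<le> \<gamma> * norm (s *\<^sub>R u - v)" using g by simp
    also have "\<dots> \<le> inner a (s *\<^sub>R u - v)" using g that by blast
    finally have "inner a v \<le> s * inner a u" by (simp add: inner_diff_right)
    moreover have "\<gamma> * norm v \<le> inner a v" using g that by blast
    ultimately have "\<gamma> * norm v \<le> s * inner a u" by linarith
    then show ?thesis using g by (simp add: field_simps)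
  qed
  moreover have "inner a u / \<gamma> > 0" using au g by simp
  ultimately show ?thesis using that by blast
qed

lemma eventually_K:
  assumes "\<And>m. y m \<in> E" "y \<longlonglongrightarrow> y0" "y0 \<in> rint E K"
  shows "\<forall>\<^sub>F m in sequentially. y m \<in> K"
proof -
  obtain e where e: "e > 0" "\<forall>y\<in>E. dist y y0 < e \<longrightarrow> y \<in> K" using assms(3) rint_iff by blast
  have "\<forall>\<^sub>F m in sequentially. dist (y m) y0 < e" using assms(2) e(1) by (rule tendstoD)
  then show ?thesis by eventually_elim (use e assms(1) in blast)
qed

lemma push:
  assumes "v \<in> K" "v \<noteq> 0"
  shows "\<exists>\<delta>>0. N v - \<delta> *\<^sub>R u \<in> rint E K"
proof -
  obtain e where e: "e > 0" "\<forall>y\<in>E. dist y (N v) < e \<longrightarrow> y \<in> rint E K"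
    using rint_open[OF Npos[OF assms]] by blast
  define \<delta> where "\<delta> = e / (2 * norm u)"
  have d: "\<delta> > 0" using e uK by (simp add: \<delta>_def)
  have "N v - \<delta> *\<^sub>R u \<in> E" using NE assms KE uK sub subspace_diff subspace_scale by blast
  moreover have "dist (N v - \<delta> *\<^sub>R u) (N v) < e"
    using e uK by (simp add: dist_norm \<delta>_def)
  ultimately show ?thesis using e d by blast
qed

lemma bl_N: "bounded_linear N" using linN linear_conv_bounded_linear by blast

lemma conv_K:
  assumes pK: "p \<in> K"
  shows "\<exists>c. (\<lambda>m. (N^^m) p) \<longlonglongrightarrow> c *\<^sub>R u"
proof -
  define z where "z m = (N^^m) p" for m
  have pE: "p \<in> E" using pK KE by blast
  have zK: "z m \<in> K" for m unfolding z_def using NmK[OF pK] .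
  have zE: "z m \<in> E" for m using zK KE by blast
  have zS: "z (Suc m) = N (z m)" for m unfolding z_def by simp
  have Nlin: "N (x - c *\<^sub>R u) = N x - c *\<^sub>R u" "N (c *\<^sub>R u - x) = c *\<^sub>R u - N x" for x c
    using linear_diff[OF linN] linear_cmul[OF linN] Nu by simp_all
  obtain t where t: "t > 0" "-p + t *\<^sub>R u \<in> K" using rint_absorb[OF sub cnK urint, of "-p"] pE sub subspace_neg by blast
  have zt: "t *\<^sub>R u - z m \<in> K" for m
  proof (induction m)
    case 0 then show ?case using t by (simp add: z_def)
  next
    case (Suc m) then show ?case using NK[OF Suc] Nlin zS by simp
  qed
  obtain C where C: "C > 0" "\<And>v s. v \<in> K \<Longrightarrow> s *\<^sub>R u - v \<in> K \<Longrightarrow> norm v \<le> C * s"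
    using interval_bound by blast
  define As where "As m = {\<alpha>. z m - \<alpha> *\<^sub>R u \<in> K}" for m
  define Bs where "Bs m = {\<beta>. \<beta> *\<^sub>R u - z m \<in> K}" for m
  define \<alpha> where "\<alpha> m = Sup (As m)" for m
  define \<beta> where "\<beta> m = Inf (Bs m)" for m
  have A0: "0 \<in> As m" for m using zK by (simp add: As_def)
  have Bt: "t \<in> Bs m" for m using zt by (simp add: Bs_def)
  have Aub: "x \<le> t" if "x \<in> As m" for x m using order_le that zt unfolding As_def by blast
  have Blb: "0 \<le> x" if "x \<in> Bs m" for x m using order_le that A0 unfolding As_def Bs_def by blast
  have AB: "x \<le> y" if "x \<in> As m" "y \<in> Bs m" for x y m using order_le that unfolding As_def Bs_def by blast
  have bdA: "bdd_above (As m)" for m using Aub by (intro bdd_aboveI[of _ t]) blast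
  have bdB: "bdd_below (Bs m)" for m using Blb by (intro bdd_belowI[of _ 0]) blast
  have cont1: "continuous_on UNIV (\<lambda>x::real. z m - x *\<^sub>R u)" for m by (intro continuous_intros)
  have cont2: "continuous_on UNIV (\<lambda>x::real. x *\<^sub>R u - z m)" for m by (intro continuous_intros)
  have clA: "closed (As m)" for m
  proof -
    have "As m = (\<lambda>x. z m - x *\<^sub>R u) -` K" unfolding As_def by auto
    then show ?thesis using closed_vimage[OF clK cont1] by simp
  qed
  have clB: "closed (Bs m)" for m
  proof -
    have "Bs m = (\<lambda>x. x *\<^sub>R u - z m) -` K" unfolding Bs_def by auto
    then show ?thesis using closed_vimage[OF clK cont2] by simp
  qed
  have \<alpha>A: "\<alpha> m \<in> As m" for m unfolding \<alpha>_def using closed_contains_Sup[OF _ bdA clA] A0 by blast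
  have \<beta>B: "\<beta> m \<in> Bs m" for m unfolding \<beta>_def using closed_contains_Inf[OF _ bdB clB] Bt by blast
  have AS: "As m \<subseteq> As (Suc m)" for m
  proof
    fix x assume "x \<in> As m"
    then have "N (z m - x *\<^sub>R u) \<in> K" using NK unfolding As_def by blast
    then show "x \<in> As (Suc m)" using Nlin zS unfolding As_def by simp
  qed
  have BS: "Bs m \<subseteq> Bs (Suc m)" for m
  proof
    fix x assume "x \<in> Bs m"
    then have "N (x *\<^sub>R u - z m) \<in> K" using NK unfolding Bs_def by blast
    then show "x \<in> Bs (Suc m)" using Nlin zS unfolding Bs_def by simp
  qed
  have inc: "incseq \<alpha>"
    by (rule incseq_SucI) (unfold \<alpha>_def, rule cSup_subset_mono[OF _ bdA AS], use A0 in blast)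
  have dec: "decseq \<beta>"
    by (rule decseq_SucI) (unfold \<beta>_def, rule cInf_superset_mono[OF _ bdB BS], use Bt in blast)
  obtain LA where LA: "\<alpha> \<longlonglongrightarrow> LA" "\<forall>i. \<alpha> i \<le> LA"
    using incseq_convergent[OF inc, of t] Aub \<alpha>A by blast
  obtain LB where LB: "\<beta> \<longlonglongrightarrow> LB" "\<forall>i. LB \<le> \<beta> i"
    using decseq_convergent[OF dec, of 0] Blb \<beta>B by blast
  have le: "LA \<le> LB" using LIMSEQ_le[OF LA(1) LB(1)] AB \<alpha>A \<beta>B by blast
  have key: "LA = LB"
  proof (rule ccontr)
    assume ne: "LA \<noteq> LB"
    have "bounded (range z)"
    proof -
      have "norm (z m) \<le> C * t" for m using C zK zt by blast
      then show ?thesis unfolding bounded_iff by blast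
    qed
    then obtain zl \<sigma> where \<sigma>: "strict_mono \<sigma>" "(z \<circ> \<sigma>) \<longlonglongrightarrow> zl"
      using bounded_imp_convergent_subsequence by blast
    have z\<sigma>: "(\<lambda>m. z (\<sigma> m)) \<longlonglongrightarrow> zl" using \<sigma> by (simp add: o_def)
    have \<alpha>\<sigma>: "(\<lambda>m. \<alpha> (\<sigma> m)) \<longlonglongrightarrow> LA" using LIMSEQ_subseq_LIMSEQ[OF LA(1) \<sigma>(1)] by (simp add: o_def)
    have \<beta>\<sigma>: "(\<lambda>m. \<beta> (\<sigma> m)) \<longlonglongrightarrow> LB" using LIMSEQ_subseq_LIMSEQ[OF LB(1) \<sigma>(1)] by (simp add: o_def)
    have zlA: "zl - LA *\<^sub>R u \<in> K"
    proof (rule closed_sequentially[OF clK])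
      show "z (\<sigma> m) - \<alpha> (\<sigma> m) *\<^sub>R u \<in> K" for m using \<alpha>A unfolding As_def by blast
      show "(\<lambda>m. z (\<sigma> m) - \<alpha> (\<sigma> m) *\<^sub>R u) \<longlonglongrightarrow> zl - LA *\<^sub>R u"
        by (intro tendsto_intros z\<sigma> \<alpha>\<sigma>)
    qed
    have zlB: "LB *\<^sub>R u - zl \<in> K"
    proof (rule closed_sequentially[OF clK])
      show "\<beta> (\<sigma> m) *\<^sub>R u - z (\<sigma> m) \<in> K" for m using \<beta>B unfolding Bs_def by blast
      show "(\<lambda>m. \<beta> (\<sigma> m) *\<^sub>R u - z (\<sigma> m)) \<longlonglongrightarrow> LB *\<^sub>R u - zl"
        by (intro tendsto_intros z\<sigma> \<beta>\<sigma>)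
    qed
    have Nz: "(\<lambda>m. N (z (\<sigma> m))) \<longlonglongrightarrow> N zl" using bounded_linear.tendsto[OF bl_N z\<sigma>] .
    have "zl \<noteq> LA *\<^sub>R u \<or> zl \<noteq> LB *\<^sub>R u"
    proof (rule ccontr)
      assume "\<not> (zl \<noteq> LA *\<^sub>R u \<or> zl \<noteq> LB *\<^sub>R u)"
      then have "(LA - LB) *\<^sub>R u = 0" by (simp add: algebra_simps)
      then show False using ne uK(2) by simp
    qed
    then show False
    proof
      assume zne: "zl \<noteq> LA *\<^sub>R u"
      have "zl - LA *\<^sub>R u \<noteq> 0" using zne by simp
      then obtain \<delta> where d: "\<delta> > 0" "N (zl - LA *\<^sub>R u) - \<delta> *\<^sub>R u \<in> rint E K"
        using push[OF zlA] by blast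
      define y where "y m = z (Suc (\<sigma> m)) - (LA + \<delta>) *\<^sub>R u" for m
      have yE: "y m \<in> E" for m unfolding y_def using zE uK sub subspace_diff subspace_scale by blast
      have "y = (\<lambda>m. N (z (\<sigma> m)) - LA *\<^sub>R u - \<delta> *\<^sub>R u)"
        unfolding y_def zS by (simp add: fun_eq_iff algebra_simps)
      moreover have "(\<lambda>m. N (z (\<sigma> m)) - LA *\<^sub>R u - \<delta> *\<^sub>R u) \<longlonglongrightarrow> N zl - LA *\<^sub>R u - \<delta> *\<^sub>R u"
        by (intro tendsto_intros Nz)
      ultimately have "y \<longlonglongrightarrow> N (zl - LA *\<^sub>R u) - \<delta> *\<^sub>R u" unfolding Nlin(1) by simp
      then have "\<forall>\<^sub>F m in sequentially. y m \<in> K" using eventually_K[where y=y, OF yE _ d(2)] by blast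
      then obtain M0 where "\<forall>m\<ge>M0. y m \<in> K" unfolding eventually_sequentially by blast
      then have "y M0 \<in> K" by simp
      then have "LA + \<delta> \<in> As (Suc (\<sigma> M0))" unfolding y_def As_def by simp
      then have "LA + \<delta> \<le> \<alpha> (Suc (\<sigma> M0))" unfolding \<alpha>_def by (rule cSup_upper[OF _ bdA])
      moreover have "\<alpha> (Suc (\<sigma> M0)) \<le> LA" using LA(2) by blast
      ultimately show False using d(1) by linarith
    next
      assume zne: "zl \<noteq> LB *\<^sub>R u"
      have "LB *\<^sub>R u - zl \<noteq> 0" using zne by simp
      then obtain \<delta> where d: "\<delta> > 0" "N (LB *\<^sub>R u - zl) - \<delta> *\<^sub>R u \<in> rint E K"
        using push[OF zlB] by blast
      define y where "y m = (LB - \<delta>) *\<^sub>R u - z (Suc (\<sigma> m))" for m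
      have yE: "y m \<in> E" for m unfolding y_def using zE uK sub subspace_diff subspace_scale by blast
      have "y = (\<lambda>m. LB *\<^sub>R u - N (z (\<sigma> m)) - \<delta> *\<^sub>R u)"
        unfolding y_def zS by (simp add: fun_eq_iff algebra_simps)
      moreover have "(\<lambda>m. LB *\<^sub>R u - N (z (\<sigma> m)) - \<delta> *\<^sub>R u) \<longlonglongrightarrow> LB *\<^sub>R u - N zl - \<delta> *\<^sub>R u"
        by (intro tendsto_intros Nz)
      ultimately have "y \<longlonglongrightarrow> N (LB *\<^sub>R u - zl) - \<delta> *\<^sub>R u" unfolding Nlin(2) by simp
      then have "\<forall>\<^sub>F m in sequentially. y m \<in> K" using eventually_K[where y=y, OF yE _ d(2)] by blast
      then obtain M0 where "\<forall>m\<ge>M0. y m \<in> K" unfolding eventually_sequentially by blast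
      then have "y M0 \<in> K" by simp
      then have "LB - \<delta> \<in> Bs (Suc (\<sigma> M0))" unfolding y_def Bs_def by simp
      then have "\<beta> (Suc (\<sigma> M0)) \<le> LB - \<delta>" unfolding \<beta>_def by (rule cInf_lower[OF _ bdB])
      moreover have "LB \<le> \<beta> (Suc (\<sigma> M0))" using LB(2) by blast
      ultimately show False using d(1) by linarith
    qed
  qed
  have "(\<lambda>m. z m - \<alpha> m *\<^sub>R u) \<longlonglongrightarrow> 0"
  proof (rule Lim_null_comparison)
    show "\<forall>\<^sub>F m in sequentially. norm (z m - \<alpha> m *\<^sub>R u) \<le> C * (\<beta> m - \<alpha> m)"
    proof (rule always_eventually, rule allI)
      fix m
      have e1: "(\<beta> m - \<alpha> m) *\<^sub>R u - (z m - \<alpha> m *\<^sub>R u) = \<beta> m *\<^sub>R u - z m" by (simp add: algebra_simps)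
      have "(\<beta> m - \<alpha> m) *\<^sub>R u - (z m - \<alpha> m *\<^sub>R u) \<in> K" unfolding e1 using \<beta>B[of m] unfolding Bs_def by simp
      then show "norm (z m - \<alpha> m *\<^sub>R u) \<le> C * (\<beta> m - \<alpha> m)"
        using C(2) \<alpha>A[of m] unfolding As_def by blast
    qed
    show "(\<lambda>m. C * (\<beta> m - \<alpha> m)) \<longlonglongrightarrow> 0"
      using tendsto_mult[OF tendsto_const[of C] tendsto_diff[OF LB(1) LA(1)]] key by simp
  qed
  then have "(\<lambda>m. (z m - \<alpha> m *\<^sub>R u) + \<alpha> m *\<^sub>R u) \<longlonglongrightarrow> 0 + LA *\<^sub>R u"
    by (intro tendsto_intros LA(1))
  then have "z \<longlonglongrightarrow> LA *\<^sub>R u" by simp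
  then show ?thesis unfolding z_def by blast
qed

lemma conv_E:
  assumes wE: "w \<in> E"
  shows "\<exists>c. (\<lambda>m. (N^^m) w) \<longlonglongrightarrow> c *\<^sub>R u"
proof -
  obtain t where t: "t > 0" "w + t *\<^sub>R u \<in> K" using rint_absorb[OF sub cnK urint wE] by blast
  obtain c where c: "(\<lambda>m. (N^^m) (w + t *\<^sub>R u)) \<longlonglongrightarrow> c *\<^sub>R u" using conv_K[OF t(2)] by blast
  have "(N^^m) (w + t *\<^sub>R u) = (N^^m) w + t *\<^sub>R u" for m
    using linear_add[OF linNm] linear_cmul[OF linNm] Nmu by simp
  then have "(\<lambda>m. (N^^m) w + t *\<^sub>R u) \<longlonglongrightarrow> c *\<^sub>R u" using c by simp
  then have "(\<lambda>m. (N^^m) w + t *\<^sub>R u - t *\<^sub>R u) \<longlonglongrightarrow> c *\<^sub>R u - t *\<^sub>R u"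
    by (intro tendsto_intros)
  then have "(\<lambda>m. (N^^m) w) \<longlonglongrightarrow> (c - t) *\<^sub>R u" by (simp add: algebra_simps)
  then show ?thesis by blast
qed

end


definition mf :: "nat \<Rightarrow> (nat \<Rightarrow> real^'n) \<Rightarrow> (nat \<Rightarrow> 'n) \<Rightarrow> real" where
  "mf k x r = (\<Sum>p | p permutes {..<k}. of_int (sign p) * (\<Prod>i<k. x i $ r (p i)))"

lemma mf_cong:
  assumes "\<And>i. i < k \<Longrightarrow> x i = y i" "\<And>i. i < k \<Longrightarrow> r i = s i"
  shows "mf k x r = mf k y s"
  unfolding mf_def
proof (intro sum.cong refl arg_cong2[where f="(*)"] prod.cong)
  fix p i assume "p \<in> {p. p permutes {..<k}}" "i \<in> {..<k}"
  then show "x i $ r (p i) = y i $ s (p i)"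
    using assms permutes_in_image[of p "{..<k}" i] by auto
qed

lemma mf_perm:
  assumes q: "q permutes {..<k}"
  shows "mf k (x \<circ> q) r = of_int (sign q) * mf k x r"
proof -
  have fin: "finite {..<k}" by simp
  have qp: "permutation q" using q permutation_permutes by blast
  have "mf k (x \<circ> q) r = (\<Sum>p | p permutes {..<k}. of_int (sign p) * (\<Prod>i<k. x i $ r (p (inv q i))))"
    unfolding mf_def
  proof (intro sum.cong refl arg_cong2[where f="(*)"])
    fix p
    have "(\<Prod>i<k. (x \<circ> q) i $ r (p i)) = (\<Prod>i<k. ((\<lambda>i. (x \<circ> q) i $ r (p i)) \<circ> inv q) i)"
      using prod.permute[OF permutes_inv[OF q]] by blast
    also have "\<dots> = (\<Prod>i<k. x i $ r (p (inv q i)))"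
      using permutes_inverses(1)[OF q] by (simp add: o_def)
    finally show "(\<Prod>i<k. (x \<circ> q) i $ r (p i)) = (\<Prod>i<k. x i $ r (p (inv q i)))" .
  qed
  also have "\<dots> = (\<Sum>p | p permutes {..<k}. of_int (sign (p \<circ> q)) * (\<Prod>i<k. x i $ r ((p \<circ> q) (inv q i))))"
    by (rule sum_permutations_compose_right[OF q])
  also have "\<dots> = (\<Sum>p | p permutes {..<k}. of_int (sign q) * (of_int (sign p) * (\<Prod>i<k. x i $ r (p i))))"
  proof (intro sum.cong refl)
    fix p assume "p \<in> {p. p permutes {..<k}}"
    then have pp: "permutation p" using permutation_permutes by blast
    show "of_int (sign (p \<circ> q)) * (\<Prod>i<k. x i $ r ((p \<circ> q) (inv q i))) =
      of_int (sign q) * (of_int (sign p) * (\<Prod>i<k. x i $ r (p i)))"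
      using permutes_inverses(1)[OF q] sign_compose[OF pp qp] by simp
  qed
  also have "\<dots> = of_int (sign q) * mf k x r"
    unfolding mf_def by (simp add: sum_distrib_left)
  finally show ?thesis .
qed

lemma mf_alt:
  assumes "a < k" "b < k" "a \<noteq> b" "x a = x b"
  shows "mf k x r = 0"
proof -
  have q: "Transposition.transpose a b permutes {..<k}" using assms by (intro permutes_swap_id) auto
  have "mf k x r = mf k (x \<circ> Transposition.transpose a b) r"
    by (rule mf_cong) (use assms in \<open>auto simp: Transposition.transpose_def\<close>)
  also have "\<dots> = - mf k x r"
    using mf_perm[OF q] assms by (simp add: sign_swap_id)
  finally show ?thesis by simp
qed

lemma mf_transpose:
  "mf k x r = (\<Sum>p | p permutes {..<k}. of_int (sign p) * (\<Prod>i<k. x (p i) $ r i))"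
proof -
  have "mf k x r = (\<Sum>p | p permutes {..<k}. of_int (sign (inv p)) * (\<Prod>i<k. x i $ r (inv p i)))"
    unfolding mf_def by (rule sum_permutations_inverse)
  also have "\<dots> = (\<Sum>p | p permutes {..<k}. of_int (sign p) * (\<Prod>i<k. x (p i) $ r i))"
  proof (intro sum.cong refl)
    fix p assume "p \<in> {p. p permutes {..<k}}"
    then have p: "p permutes {..<k}" by simp
    then have pp: "permutation p" using permutation_permutes by blast
    have "(\<Prod>i<k. x i $ r (inv p i)) = (\<Prod>i<k. ((\<lambda>i. x i $ r (inv p i)) \<circ> p) i)"
      using prod.permute[OF p] by blast
    also have "\<dots> = (\<Prod>i<k. x (p i) $ r i)"
      using permutes_inverses(2)[OF p] by (simp add: o_def)
    finally show "of_int (sign (inv p)) * (\<Prod>i<k. x i $ r (inv p i)) = of_int (sign p) * (\<Prod>i<k. x (p i) $ r i)"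
      using sign_inverse[OF pp] by simp
  qed
  finally show ?thesis .
qed

lemma mf_lin:
  assumes "a < k"
  shows "mf k (x(a := u + c *\<^sub>R v)) r = mf k (x(a := u)) r + c * mf k (x(a := v)) r"
proof -
  have split: "\<And>(y::nat \<Rightarrow> (real,_) vec) p. (\<Prod>i<k. y i $ r (p i)) = y a $ r (p a) * (\<Prod>i\<in>{..<k}-{a}. y i $ r (p i))"
    using assms by (subst prod.remove[of "{..<k}" a]) auto
  have rest: "\<And>p w. (\<Prod>i\<in>{..<k}-{a}. (x(a:=w)) i $ r (p i)) = (\<Prod>i\<in>{..<k}-{a}. x i $ r (p i))"
    by (intro prod.cong) auto
  show ?thesis
    unfolding mf_def
    by (simp add: split rest sum.distrib sum_distrib_left algebra_simps)
qed

lemma mf_zero: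
  assumes "a < k" "x a = 0"
  shows "mf k x r = 0"
proof -
  have "\<And>p. p permutes {..<k} \<Longrightarrow> (\<Prod>i<k. x i $ r (p i)) = 0"
  proof -
    fix p assume "p permutes {..<k}"
    show "(\<Prod>i<k. x i $ r (p i)) = 0"
      by (rule prod_zero) (use assms in \<open>auto intro!: bexI[of _ a]\<close>)
  qed
  then show ?thesis unfolding mf_def by (intro sum.neutral) auto
qed

lemma mf_scale:
  assumes "a < k"
  shows "mf k (x(a := c *\<^sub>R v)) r = c * mf k (x(a := v)) r"
proof -
  have "mf k (x(a := 0 + c *\<^sub>R v)) r = mf k (x(a := 0)) r + c * mf k (x(a := v)) r"
    by (rule mf_lin[OF assms])
  moreover have "mf k (x(a := 0)) r = 0" using assms by (intro mf_zero[of a]) auto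
  ultimately show ?thesis by simp
qed

lemma mf_addmult:
  assumes "a < k" "b < k" "a \<noteq> b"
  shows "mf k (x(a := x a + c *\<^sub>R x b)) r = mf k x r"
proof -
  have "mf k (x(a := x a + c *\<^sub>R x b)) r = mf k (x(a := x a)) r + c * mf k (x(a := x b)) r"
    by (rule mf_lin[OF assms(1)])
  moreover have "mf k (x(a := x b)) r = 0"
    using assms by (intro mf_alt[of a k b]) auto
  ultimately show ?thesis by simp
qed


lemma mf_expand:
  fixes A :: "real^'n::finite^'n"
  shows "mf k (\<lambda>i. A *v x i) r =
    (\<Sum>\<tau>\<in>Pi\<^sub>E {..<k} (\<lambda>_. UNIV). (\<Prod>i<k. x i $ \<tau> i) * mf k (\<lambda>i. column (\<tau> i) A) r)"
proof -
  have "mf k (\<lambda>i. A *v x i) r = (\<Sum>p | p permutes {..<k}. of_int (sign p) *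
      (\<Prod>i<k. \<Sum>l\<in>UNIV. A $ r (p i) $ l * x i $ l))"
    unfolding mf_def by (simp add: matrix_vector_mult_def)
  also have "\<dots> = (\<Sum>p | p permutes {..<k}. of_int (sign p) *
      (\<Sum>\<tau>\<in>Pi\<^sub>E {..<k} (\<lambda>_. UNIV). \<Prod>i<k. A $ r (p i) $ \<tau> i * x i $ \<tau> i))"
    by (subst prod_sum_PiE) auto
  also have "\<dots> = (\<Sum>p | p permutes {..<k}. \<Sum>\<tau>\<in>Pi\<^sub>E {..<k} (\<lambda>_. UNIV).
      (\<Prod>i<k. x i $ \<tau> i) * (of_int (sign p) * (\<Prod>i<k. A $ r (p i) $ \<tau> i)))"
    by (simp add: sum_distrib_left prod.distrib mult_ac)
  also have "\<dots> = (\<Sum>\<tau>\<in>Pi\<^sub>E {..<k} (\<lambda>_. UNIV). \<Sum>p | p permutes {..<k}.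
      (\<Prod>i<k. x i $ \<tau> i) * (of_int (sign p) * (\<Prod>i<k. A $ r (p i) $ \<tau> i)))"
    by (rule sum.swap)
  also have "\<dots> = (\<Sum>\<tau>\<in>Pi\<^sub>E {..<k} (\<lambda>_. UNIV). (\<Prod>i<k. x i $ \<tau> i) * mf k (\<lambda>i. column (\<tau> i) A) r)"
    unfolding mf_def by (simp add: sum_distrib_left column_def)
  finally show ?thesis .
qed

lemma length_sl: "length (sorted_list_of_set (J::'a::{finite,linorder} set)) = card J"
  by simp

lemma set_sl: "set (sorted_list_of_set (J::'a::{finite,linorder} set)) = J"
  by simp

lemma mf_CB:
  fixes r :: "nat \<Rightarrow> 'n::{finite,linorder}" and A :: "((real,'n) vec, 'n) vec"
  shows "mf k (\<lambda>i. A *v x i) r =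
    (\<Sum>J | card J = k. mf k (\<lambda>i. column (sorted_list_of_set J ! i) A) r *
        mf k x (\<lambda>i. sorted_list_of_set J ! i))"
proof -
  define D where "D \<tau> = mf k (\<lambda>i. column (\<tau> i) A) r" for \<tau>
  define P where "P = Pi\<^sub>E {..<k} (\<lambda>_. UNIV::'n set)"
  define Inj where "Inj = {\<tau>\<in>P. inj_on \<tau> {..<k}}"
  define g where "g \<tau> = (\<Prod>i<k. x i $ \<tau> i) * D \<tau>" for \<tau>
  define sl where "sl J = sorted_list_of_set (J::'n set)" for J
  define h where "h = (\<lambda>(J, \<pi>). restrict (\<lambda>i. sl J ! \<pi> i) {..<k})"
  define SG where "SG = (SIGMA J:{J::'n set. card J = k}. {\<pi>. \<pi> permutes {..<k}})"
  have finP: "finite P" unfolding P_def by (intro finite_PiE) auto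
  have "mf k (\<lambda>i. A *v x i) r = sum g P"
    unfolding mf_expand g_def D_def P_def ..
  also have "\<dots> = sum g Inj"
  proof (rule sum.mono_neutral_right[OF finP])
    show "Inj \<subseteq> P" unfolding Inj_def by auto
    show "\<forall>\<tau>\<in>P - Inj. g \<tau> = 0"
    proof
      fix \<tau> assume "\<tau> \<in> P - Inj"
      then obtain a b where ab: "a < k" "b < k" "a \<noteq> b" "\<tau> a = \<tau> b"
        unfolding Inj_def inj_on_def by auto
      have "D \<tau> = 0" unfolding D_def by (rule mf_alt[OF ab(1,2,3)]) (simp add: ab(4))
      then show "g \<tau> = 0" unfolding g_def by simp
    qed
  qed
  also have "\<dots> = (\<Sum>a\<in>SG. g (h a))"
  proof (rule sum.reindex_bij_betw[symmetric])
    show "bij_betw h SG Inj"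
    proof (rule bij_betwI')
      fix a b assume "a \<in> SG" "b \<in> SG"
      then obtain J \<pi> J' \<pi>' where a: "a = (J, \<pi>)" "card J = k" "\<pi> permutes {..<k}"
        and b: "b = (J', \<pi>')" "card J' = k" "\<pi>' permutes {..<k}"
        unfolding SG_def by auto
      show "(h a = h b) = (a = b)"
      proof
        assume eq: "h a = h b"
        have img: "(\<lambda>i. sl K ! \<sigma> i) ` {..<k} = K" if "card K = k" "\<sigma> permutes {..<k}" for K \<sigma>
        proof -
          have "(\<lambda>i. sl K ! \<sigma> i) ` {..<k} = (\<lambda>i. sl K ! i) ` (\<sigma> ` {..<k})" by auto
          also have "\<dots> = (\<lambda>i. sl K ! i) ` {..<length (sl K)}"
            using permutes_image[OF that(2)] that(1) unfolding sl_def by simp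
          also have "\<dots> = set (sl K)" by (auto simp: in_set_conv_nth)
          finally show ?thesis unfolding sl_def by simp
        qed
        have "(\<lambda>i. sl J ! \<pi> i) ` {..<k} = (\<lambda>i. sl J' ! \<pi>' i) ` {..<k}"
        proof -
          have "\<forall>i\<in>{..<k}. sl J ! \<pi> i = sl J' ! \<pi>' i"
            using eq unfolding a b h_def by (metis (no_types, lifting) case_prod_conv restrict_apply')
          then show ?thesis by (auto intro!: image_cong)
        qed
        then have JJ: "J = J'" using img a b by simp
        have "\<pi> i = \<pi>' i" for i
        proof (cases "i < k")
          case True
          then have "sl J ! \<pi> i = sl J ! \<pi>' i"
            using eq unfolding a b h_def JJ by (metis (no_types, lifting) case_prod_conv lessThan_iff restrict_apply')
          moreover have "\<pi> i < length (sl J)" "\<pi>' i < length (sl J)"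
            using True a b JJ permutes_in_image unfolding sl_def by fastforce+
          ultimately show ?thesis using nth_eq_iff_index_eq[of "sl J"] unfolding sl_def by auto
        next
          case False
          then show ?thesis using a(3) b(3) by (simp add: permutes_def)
        qed
        then show "a = b" using a b JJ by auto
      qed simp
    next
      fix a assume "a \<in> SG"
      then obtain J \<pi> where a: "a = (J, \<pi>)" "card J = k" "\<pi> permutes {..<k}"
        unfolding SG_def by auto
      have "inj_on (\<lambda>i. sl J ! \<pi> i) {..<k}"
      proof (rule inj_onI)
        fix i i' assume "i \<in> {..<k}" "i' \<in> {..<k}" "sl J ! \<pi> i = sl J ! \<pi> i'"
        moreover have "\<pi> i < length (sl J)" "\<pi> i' < length (sl J)"
          using \<open>i \<in> _\<close> \<open>i' \<in> _\<close> a permutes_in_image unfolding sl_def by fastforce+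
        ultimately have "\<pi> i = \<pi> i'" using nth_eq_iff_index_eq[of "sl J"] unfolding sl_def by auto
        then show "i = i'" using permutes_inj[OF a(3)] by (auto dest: injD)
      qed
      then show "h a \<in> Inj" unfolding a h_def Inj_def P_def
        by (auto simp: inj_on_def)
    next
      fix \<tau> assume "\<tau> \<in> Inj"
      then have tP: "\<tau> \<in> P" and ti: "inj_on \<tau> {..<k}" unfolding Inj_def by auto
      define J where "J = \<tau> ` {..<k}"
      have cJ: "card J = k" unfolding J_def using card_image[OF ti] by simp
      have lJ: "length (sl J) = k" unfolding sl_def using cJ by simp
      have dJ: "distinct (sl J)" unfolding sl_def by simp
      have sJ: "set (sl J) = J" unfolding sl_def by simp
      have injn: "inj_on (\<lambda>m. sl J ! m) {..<k}"
        using dJ lJ by (intro inj_on_nth) auto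
      have imn: "(\<lambda>m. sl J ! m) ` {..<k} = J"
      proof -
        have "(\<lambda>m. sl J ! m) ` {..<k} = set (sl J)" using lJ by (auto simp: set_conv_nth)
        then show ?thesis using sJ by simp
      qed
      define \<pi> where "\<pi> i = (if i < k then the_inv_into {..<k} (\<lambda>m. sl J ! m) (\<tau> i) else i)" for i
      have tJ: "\<tau> i \<in> (\<lambda>m. sl J ! m) ` {..<k}" if "i < k" for i
        using that imn unfolding J_def by auto
      have \<pi>lt: "\<pi> i < k" if "i < k" for i
        using the_inv_into_into[OF injn tJ[OF that], of "{..<k}"] that unfolding \<pi>_def by auto
      have \<pi>nth: "sl J ! \<pi> i = \<tau> i" if "i < k" for i
        using f_the_inv_into_f[OF injn tJ[OF that]] that unfolding \<pi>_def by auto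
      have inj\<pi>: "inj_on \<pi> {..<k}"
      proof (rule inj_onI)
        fix i i' assume "i \<in> {..<k}" "i' \<in> {..<k}" "\<pi> i = \<pi> i'"
        then have "\<tau> i = \<tau> i'" using \<pi>nth by (metis lessThan_iff)
        then show "i = i'" using ti \<open>i \<in> _\<close> \<open>i' \<in> _\<close> by (auto dest: inj_onD)
      qed
      have "\<pi> ` {..<k} = {..<k}"
        by (rule endo_inj_surj) (use \<pi>lt inj\<pi> in auto)
      then have "bij_betw \<pi> {..<k} {..<k}" using inj\<pi> by (simp add: bij_betw_def)
      then have perm: "\<pi> permutes {..<k}"
        unfolding permutes_altdef by (auto simp: \<pi>_def)
      have "h (J, \<pi>) = \<tau>"
      proof
        fix i show "h (J, \<pi>) i = \<tau> i"
          using tP \<pi>nth unfolding h_def P_def by (cases "i < k") (auto simp: PiE_def extensional_def)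
      qed
      moreover have "(J, \<pi>) \<in> SG" unfolding SG_def using cJ perm by auto
      ultimately show "\<exists>a\<in>SG. \<tau> = h a" by metis
    qed
  qed
  also have "\<dots> = (\<Sum>J | card J = k. \<Sum>\<pi> | \<pi> permutes {..<k}. g (h (J, \<pi>)))"
    unfolding SG_def by (subst sum.Sigma) (auto simp: split_beta finite_permutations)
  also have "\<dots> = (\<Sum>J | card J = k. D (\<lambda>i. sl J ! i) * mf k x (\<lambda>i. sl J ! i))"
  proof (rule sum.cong[OF refl])
    fix J assume "J \<in> {J::'n set. card J = k}"
    then have cJ: "card J = k" by simp
    have "(\<Sum>\<pi> | \<pi> permutes {..<k}. g (h (J, \<pi>))) =
        (\<Sum>\<pi> | \<pi> permutes {..<k}. D (\<lambda>i. sl J ! i) * (of_int (sign \<pi>) * (\<Prod>i<k. x i $ sl J ! \<pi> i)))"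
    proof (rule sum.cong[OF refl])
      fix \<pi> assume "\<pi> \<in> {\<pi>. \<pi> permutes {..<k}}"
      then have \<pi>: "\<pi> permutes {..<k}" by simp
      have "D (h (J, \<pi>)) = D ((\<lambda>i. sl J ! i) \<circ> \<pi>)"
        unfolding D_def by (rule mf_cong) (auto simp: h_def)
      also have "\<dots> = mf k ((\<lambda>i. column (sl J ! i) A) \<circ> \<pi>) r"
        unfolding D_def by (simp add: o_def)
      also have "\<dots> = of_int (sign \<pi>) * D (\<lambda>i. sl J ! i)"
        unfolding D_def by (rule mf_perm[OF \<pi>])
      finally have "D (h (J, \<pi>)) = of_int (sign \<pi>) * D (\<lambda>i. sl J ! i)" .
      moreover have "(\<Prod>i<k. x i $ h (J, \<pi>) i) = (\<Prod>i<k. x i $ sl J ! \<pi> i)"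
        by (rule prod.cong) (auto simp: h_def)
      ultimately show "g (h (J, \<pi>)) = D (\<lambda>i. sl J ! i) * (of_int (sign \<pi>) * (\<Prod>i<k. x i $ sl J ! \<pi> i))"
        unfolding g_def by simp
    qed
    also have "\<dots> = D (\<lambda>i. sl J ! i) * mf k x (\<lambda>i. sl J ! i)"
      unfolding mf_def by (simp add: sum_distrib_left)
    finally show "(\<Sum>\<pi> | \<pi> permutes {..<k}. g (h (J, \<pi>))) = D (\<lambda>i. sl J ! i) * mf k x (\<lambda>i. sl J ! i)" .
  qed
  finally show ?thesis unfolding D_def sl_def .
qed


abbreviation sl :: "'n::{finite,linorder} set \<Rightarrow> 'n list" where
  "sl J \<equiv> sorted_list_of_set J"

lemma wedge_nth:
  "wedge xs $ I = (if card I = length xs then mf (length xs) (\<lambda>i. xs ! i) (\<lambda>i. sl I ! i) else 0)"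
  by (simp add: wedge_def mf_def Let_def)

lemma wedge_in_ext: "wedge xs \<in> ext_space (length xs)"
  unfolding ext_space_def by (simp add: wedge_nth)

lemma compound_nth:
  "compound j A v $ I = (if card I = j then
      (\<Sum>J | card J = j. mf j (\<lambda>i. column (sl J ! i) A) (\<lambda>i. sl I ! i) * v $ J) else 0)"
proof (cases "card I = j")
  case True
  have "(\<Sum>J | card J = j. wedge (map (\<lambda>k. column k A) (sl J)) $ I * v $ J) =
      (\<Sum>J | card J = j. mf j (\<lambda>i. column (sl J ! i) A) (\<lambda>i. sl I ! i) * v $ J)"
  proof (rule sum.cong[OF refl])
    fix J :: "'a set" assume "J \<in> {J. card J = j}"
    then have cJ: "card J = j" by simp
    have "mf j (\<lambda>i. map (\<lambda>k. column k A) (sl J) ! i) (\<lambda>i. sl I ! i) = mf j (\<lambda>i. column (sl J ! i) A) (\<lambda>i. sl I ! i)"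
      by (rule mf_cong) (use cJ in auto)
    then show "wedge (map (\<lambda>k. column k A) (sl J)) $ I * v $ J = mf j (\<lambda>i. column (sl J ! i) A) (\<lambda>i. sl I ! i) * v $ J"
      using cJ True by (simp add: wedge_nth)
  qed
  then show ?thesis using True unfolding compound_def by simp
next
  case False
  then show ?thesis unfolding compound_def by simp
qed

lemma compound_in_ext: "compound j A v \<in> ext_space j"
  unfolding ext_space_def by (simp add: compound_nth)

lemma linear_compound: "linear (compound j A)"
  by (rule linearI) (simp_all add: vec_eq_iff compound_nth sum.distrib sum_distrib_left algebra_simps)

lemma CB_wedge: "compound (length xs) A (wedge xs) = wedge (map (\<lambda>x. A *v x) xs)"
proof -
  have "compound (length xs) A (wedge xs) $ I = wedge (map (\<lambda>x. A *v x) xs) $ I" for I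
  proof (cases "card I = length xs")
    case True
    have "mf (length xs) (\<lambda>i. map (\<lambda>x. A *v x) xs ! i) (\<lambda>i. sl I ! i) =
          mf (length xs) (\<lambda>i. A *v (xs ! i)) (\<lambda>i. sl I ! i)"
      by (rule mf_cong) auto
    also have "\<dots> = (\<Sum>J | card J = length xs. mf (length xs) (\<lambda>i. column (sl J ! i) A) (\<lambda>i. sl I ! i) *
        mf (length xs) (\<lambda>i. xs ! i) (\<lambda>i. sl J ! i))"
      by (rule mf_CB)
    also have "\<dots> = (\<Sum>J | card J = length xs. mf (length xs) (\<lambda>i. column (sl J ! i) A) (\<lambda>i. sl I ! i) *
        wedge xs $ J)"
      by (intro sum.cong refl) (simp add: wedge_nth)
    finally show ?thesis using True by (simp add: compound_nth wedge_nth)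
  next
    case False
    then show ?thesis by (simp add: compound_nth wedge_nth)
  qed
  then show ?thesis by (simp add: vec_eq_iff)
qed

lemma linear_wedge_pos:
  assumes "a < length L"
  shows "linear (\<lambda>v. wedge (L[a := v]))"
proof (rule linearI)
  fix u v c
  have eq: "(\<lambda>i. L[a := w] ! i) = (\<lambda>i. L ! i)(a := w)" for w
    using assms by (auto simp: fun_eq_iff nth_list_update)
  have W: "wedge (L[a := w]) $ I = (if card I = length L then mf (length L) ((\<lambda>i. L ! i)(a := w)) (\<lambda>i. sl I ! i) else 0)" for w I
    by (subst wedge_nth) (simp only: length_list_update eq)
  have l1: "mf (length L) ((\<lambda>i. L ! i)(a := u + v)) r = mf (length L) ((\<lambda>i. L ! i)(a := u)) r + mf (length L) ((\<lambda>i. L ! i)(a := v)) r" for r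
    using mf_lin[OF assms, of "\<lambda>i. L ! i" u 1 v] by simp
  have l2: "mf (length L) ((\<lambda>i. L ! i)(a := c *\<^sub>R u)) r = c * mf (length L) ((\<lambda>i. L ! i)(a := u)) r" for r
    using mf_scale[OF assms, of "\<lambda>i. L ! i" c u] by simp
  show "wedge (L[a := u + v]) = wedge (L[a := u]) + wedge (L[a := v])"
    unfolding vec_eq_iff vector_add_component W l1 by simp
  show "wedge (L[a := c *\<^sub>R u]) = c *\<^sub>R wedge (L[a := u])"
    unfolding vec_eq_iff vector_scaleR_component W l2 by simp
qed

lemma wedge_alt:
  assumes "a < length L" "b < length L" "a \<noteq> b" "L ! a = L ! b"
  shows "wedge L = 0"
  using mf_alt[OF assms] by (simp add: vec_eq_iff wedge_nth)

lemma wedge_zero_entry: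
  assumes "a < length L" "L ! a = 0"
  shows "wedge L = 0"
  using mf_zero[of a "length L" "\<lambda>i. L ! i"] assms by (simp add: vec_eq_iff wedge_nth)

lemma wedge_add_comb:
  assumes "a < length L" "B \<subseteq> {..<length L}" "a \<notin> B"
  shows "wedge (L[a := L ! a + (\<Sum>b\<in>B. c b *\<^sub>R L ! b)]) = wedge L"
proof -
  interpret lin: linear "\<lambda>v. wedge (L[a := v])" by (rule linear_wedge_pos[OF assms(1)])
  have fB: "finite B" using assms(2) finite_subset by blast
  have "wedge (L[a := L ! a + (\<Sum>b\<in>B. c b *\<^sub>R L ! b)]) =
        wedge (L[a := L ! a]) + (\<Sum>b\<in>B. c b *\<^sub>R wedge (L[a := L ! b]))"
    by (simp add: lin.add lin.sum lin.scale)
  also have "(\<Sum>b\<in>B. c b *\<^sub>R wedge (L[a := L ! b])) = 0"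
  proof (rule sum.neutral, rule ballI)
    fix b assume "b \<in> B"
    then have "b < length L" "a \<noteq> b" using assms by auto
    then have "wedge (L[a := L ! b]) = 0"
      using assms(1) by (intro wedge_alt[of a _ b]) (auto simp: nth_list_update)
    then show "c b *\<^sub>R wedge (L[a := L ! b]) = 0" by simp
  qed
  finally show ?thesis by simp
qed

lemma wedge_scale_pos:
  assumes "a < length L"
  shows "wedge (L[a := c *\<^sub>R L ! a]) = c *\<^sub>R wedge L"
proof -
  interpret lin: linear "\<lambda>v. wedge (L[a := v])" by (rule linear_wedge_pos[OF assms(1)])
  show ?thesis by (simp add: lin.scale)
qed

lemma linear_wedge_hd: "linear (\<lambda>v. wedge (v # xs))"
  using linear_wedge_pos[of 0 "0 # xs"] by simp

lemma mf_ident: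
  assumes "\<And>i p. i < k \<Longrightarrow> p < k \<Longrightarrow> x i $ r p = (if i = p then 1 else 0)"
  shows "mf k x r = 1"
proof -
  have "mf k x r = (\<Sum>p\<in>{id}. of_int (sign p) * (\<Prod>i<k. x i $ r (p i)))"
    unfolding mf_def
  proof (rule sum.mono_neutral_right)
    show "finite {p. p permutes {..<k}}" by (simp add: finite_permutations)
    show "{id} \<subseteq> {p. p permutes {..<k}}" by (simp add: permutes_id)
    show "\<forall>p\<in>{p. p permutes {..<k}} - {id}. of_int (sign p) * (\<Prod>i<k. x i $ r (p i)) = 0"
    proof
      fix p assume p: "p \<in> {p. p permutes {..<k}} - {id}"
      then obtain i where i: "p i \<noteq> i" by (auto simp: fun_eq_iff)
      then have "i < k" using p by (auto simp: permutes_def)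
      moreover have "p i < k" using p \<open>i < k\<close> permutes_in_image by fastforce
      ultimately have "x i $ r (p i) = 0" using assms i by auto
      then have "(\<Prod>i<k. x i $ r (p i)) = 0" using \<open>i < k\<close> by (intro prod_zero) auto
      then show "of_int (sign p) * (\<Prod>i<k. x i $ r (p i)) = 0" by simp
    qed
  qed
  also have "\<dots> = 1" using assms by simp
  finally show ?thesis .
qed

definition eJ :: "'n::{finite,linorder} set \<Rightarrow> real^('n set)" where
  "eJ J = (\<chi> I. if I = J then 1 else 0)"

lemma wedge_basis:
  fixes J :: "'n::{finite,linorder} set"
  shows "wedge (map (\<lambda>k. axis k 1) (sl J)) = eJ J"
proof -
  have "wedge (map (\<lambda>k. axis k 1) (sl J)) $ I = eJ J $ I" for I
  proof (cases "card I = card J")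
    case True
    let ?x = "\<lambda>i. map (\<lambda>k. axis k (1::real)) (sl J) ! i"
    show ?thesis
    proof (cases "I = J")
      case True
      have "mf (card J) ?x (\<lambda>i. sl J ! i) = 1"
      proof (rule mf_ident)
        fix i p assume "i < card J" "p < card J"
        then show "?x i $ sl J ! p = (if i = p then 1 else 0)"
          using nth_eq_iff_index_eq[of "sl J" i p] by (auto simp: axis_def)
      qed
      then show ?thesis using True by (simp add: wedge_nth eJ_def)
    next
      case False
      have "\<not> J \<subseteq> I"
      proof
        assume "J \<subseteq> I"
        then have "J = I" using \<open>card I = card J\<close> by (intro card_subset_eq) auto
        then show False using False by simp
      qed
      then obtain t where t: "t \<in> J" "t \<notin> I" by auto
      then obtain i0 where i0: "i0 < card J" "sl J ! i0 = t"
        by (metis in_set_conv_nth length_sorted_list_of_set set_sl)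
      have "mf (card J) ?x (\<lambda>i. sl I ! i) = 0"
        unfolding mf_def
      proof (rule sum.neutral, rule ballI)
        fix p assume p: "p \<in> {p. p permutes {..<card J}}"
        have "p i0 < card I" using p i0 \<open>card I = card J\<close> permutes_in_image by fastforce
        then have "sl I ! p i0 \<in> I" by (metis nth_mem length_sorted_list_of_set set_sl)
        then have "?x i0 $ sl I ! p i0 = 0" using i0 t by (auto simp: axis_def)
        then have "(\<Prod>i<card J. ?x i $ sl I ! p i) = 0" using i0 by (intro prod_zero) auto
        then show "of_int (sign p) * (\<Prod>i<card J. ?x i $ sl I ! p i) = 0" by simp
      qed
      then show ?thesis using False True by (simp add: wedge_nth eJ_def)
    qed
  next
    case False
    then show ?thesis by (auto simp: wedge_nth eJ_def)
  qed
  then show ?thesis by (simp add: vec_eq_iff)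
qed

lemma ext_space_sum_eJ:
  assumes "v \<in> ext_space j"
  shows "v = (\<Sum>J | card J = j. v $ J *\<^sub>R eJ J)"
proof -
  have c: "(\<Sum>J | card J = j. v $ J *\<^sub>R eJ J) $ I = (\<Sum>J | card J = j. if J = I then v $ J else 0)" for I
    unfolding sum_component vector_scaleR_component eJ_def vec_lambda_beta
    by (rule sum.cong) simp_all
  have "v $ I = (\<Sum>J | card J = j. v $ J *\<^sub>R eJ J) $ I" for I
  proof -
    have "(\<Sum>J | card J = j. if J = I then v $ J else 0) = (if I \<in> {J. card J = j} then v $ I else 0)"
      by (rule sum.delta) simp
    then show ?thesis using assms unfolding c ext_space_def by auto
  qed
  then show ?thesis by (subst vec_eq_iff) blast
qed


lemma wedge_tendsto:
  assumes len: "\<And>m. length (f m) = k" "length ys = k"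
    and conv: "\<And>i. i < k \<Longrightarrow> (\<lambda>m. f m ! i) \<longlonglongrightarrow> ys ! i"
  shows "(\<lambda>m. wedge (f m)) \<longlonglongrightarrow> wedge ys"
proof (rule vec_tendstoI)
  fix I :: "'a set"
  show "(\<lambda>m. wedge (f m) $ I) \<longlonglongrightarrow> wedge ys $ I"
  proof (cases "card I = k")
    case True
    have "(\<lambda>m. mf k (\<lambda>i. f m ! i) (\<lambda>i. sl I ! i)) \<longlonglongrightarrow> mf k (\<lambda>i. ys ! i) (\<lambda>i. sl I ! i)"
      unfolding mf_def
      by (intro tendsto_sum tendsto_mult tendsto_const tendsto_prod tendsto_vec_nth conv) auto
    then show ?thesis using True len by (simp add: wedge_nth)
  next
    case False
    then show ?thesis using len by (simp add: wedge_nth)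
  qed
qed

lemma seq_lists:
  fixes f :: "nat \<Rightarrow> 'a::euclidean_space list"
  assumes "\<And>m. length (f m) = k" "\<And>m i. i < k \<Longrightarrow> norm (f m ! i) \<le> B"
  shows "\<exists>\<sigma> ys. strict_mono \<sigma> \<and> length ys = k \<and> (\<forall>i<k. (\<lambda>m. f (\<sigma> m) ! i) \<longlonglongrightarrow> ys ! i)"
  using assms
proof (induction k arbitrary: f)
  case 0
  then show ?case by (intro exI[of _ id] exI[of _ "[]"]) (simp add: strict_mono_def)
next
  case (Suc k)
  define g where "g m = tl (f m)" for m
  have fne: "f m \<noteq> []" for m using Suc.prems(1)[of m] by auto
  have f0: "f m ! 0 = hd (f m)" for m using hd_conv_nth[OF fne[of m]] by simp
  have fS: "f m ! Suc i = g m ! i" if "i < k" for m i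
    using nth_tl[of i "f m"] that Suc.prems(1)[of m] unfolding g_def by simp
  have lg: "length (g m) = k" for m using Suc.prems(1) by (simp add: g_def)
  have ng: "norm (g m ! i) \<le> B" if "i < k" for m i
    using Suc.prems(2)[of "Suc i" m] that Suc.prems(1)[of m] unfolding g_def by (simp add: nth_tl)
  have "\<exists>\<sigma> ys. strict_mono \<sigma> \<and> length ys = k \<and> (\<forall>i<k. (\<lambda>m. g (\<sigma> m) ! i) \<longlonglongrightarrow> ys ! i)"
  proof (rule Suc.IH)
    show "length (g m) = k" for m by (rule lg)
    show "norm (g m ! i) \<le> B" if "i < k" for m i using ng[OF that] .
  qed
  then obtain \<sigma>1 ys1 where s1: "strict_mono \<sigma>1" "length ys1 = k" "\<forall>i<k. (\<lambda>m. g (\<sigma>1 m) ! i) \<longlonglongrightarrow> ys1 ! i"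
    by blast
  have "bounded (range (\<lambda>m. hd (f (\<sigma>1 m))))"
  proof -
    have "norm (hd (f (\<sigma>1 m))) \<le> B" for m
      using Suc.prems(2)[of 0 "\<sigma>1 m"] f0[of "\<sigma>1 m"] by simp
    then show ?thesis unfolding bounded_iff by blast
  qed
  then obtain l \<sigma>2 where s2: "strict_mono \<sigma>2" "((\<lambda>m. hd (f (\<sigma>1 m))) \<circ> \<sigma>2) \<longlonglongrightarrow> l"
    using bounded_imp_convergent_subsequence by blast
  define \<sigma> where "\<sigma> = \<sigma>1 \<circ> \<sigma>2"
  have sm: "strict_mono \<sigma>" unfolding \<sigma>_def using s1(1) s2(1) by (rule strict_mono_o)
  have "\<forall>i<Suc k. (\<lambda>m. f (\<sigma> m) ! i) \<longlonglongrightarrow> (l # ys1) ! i"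
  proof (intro allI impI)
    fix i assume i: "i < Suc k"
    show "(\<lambda>m. f (\<sigma> m) ! i) \<longlonglongrightarrow> (l # ys1) ! i"
    proof (cases i)
      case 0
      have "f (\<sigma> m) ! 0 = hd (f (\<sigma>1 (\<sigma>2 m)))" for m
        using f0[of "\<sigma> m"] unfolding \<sigma>_def by simp
      then have "(\<lambda>m. f (\<sigma> m) ! 0) = (\<lambda>m. hd (f (\<sigma>1 m))) \<circ> \<sigma>2"
        by (simp add: fun_eq_iff)
      then show ?thesis using s2 0 by simp
    next
      case (Suc i')
      then have i': "i' < k" using i by simp
      have "(\<lambda>m. g (\<sigma>1 (\<sigma>2 m)) ! i') \<longlonglongrightarrow> ys1 ! i'"
        using LIMSEQ_subseq_LIMSEQ[OF s1(3)[rule_format, OF i'] s2(1)] by (simp add: o_def)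
      moreover have "f (\<sigma> m) ! i = g (\<sigma>1 (\<sigma>2 m)) ! i'" for m
        using fS[OF i', of "\<sigma> m"] Suc unfolding \<sigma>_def by simp
      ultimately show ?thesis using Suc by simp
    qed
  qed
  then show ?case using sm s1(2) by (intro exI[of _ \<sigma>] exI[of _ "l # ys1"]) simp
qed

lemma wedge_orthonormal_nz:
  fixes V :: "(real^'n::{finite,linorder}) list"
  assumes kn: "length V \<le> CARD('n)"
    and on: "\<And>i k. i < length V \<Longrightarrow> k < length V \<Longrightarrow> inner (V ! i) (V ! k) = (if i = k then 1 else 0)"
  shows "wedge V \<noteq> 0"
proof
  assume w0: "wedge V = 0"
  define k where "k = length V"
  define en where "en = sl (UNIV :: 'n set)"
  have len: "length en = CARD('n)" unfolding en_def by simp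
  have den: "distinct en" "sorted en" unfolding en_def by simp_all
  define I0 where "I0 = set (take k en)"
  have sI0: "sl I0 = take k en"
    unfolding I0_def using den by (simp add: sorted_list_of_set_sort_remdups distinct_take sorted_wrt_take sorted_sort_id)
  have cI0: "card I0 = k" unfolding I0_def using den kn len k_def by (simp add: distinct_card)
  have sI0n: "sl I0 ! i = en ! i" if "i < k" for i using sI0 that by simp
  have enk: "en ! i = en ! p \<longleftrightarrow> i = p" if "i < k" "p < k" for i p
    using nth_eq_iff_index_eq[OF den(1)] that kn len k_def by auto
  define G :: "((real,'n) vec,'n) vec" where "G = (\<chi> r. \<Sum>i<k. if en ! i = r then V ! i else 0)"
  have Grow: "G $ (en ! p) = V ! p" if "p < k" for p
  proof -
    have "G $ (en ! p) = (\<Sum>i<k. if i = p then V ! i else 0)"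
      unfolding G_def vec_lambda_beta using enk that by (intro sum.cong) auto
    also have "\<dots> = V ! p" using that by (simp add: sum.delta)
    finally show ?thesis .
  qed
  have Gv: "(G *v y) $ (en ! p) = inner (V ! p) y" if "p < k" for p y
    using Grow[OF that] by (simp add: matrix_vector_mult_def inner_vec_def)
  have "wedge (map (\<lambda>x. G *v x) V) $ I0 = mf k (\<lambda>i. G *v (V ! i)) (\<lambda>i. sl I0 ! i)"
    using cI0 k_def by (simp add: wedge_nth) (rule mf_cong; simp)
  also have "\<dots> = 1"
  proof (rule mf_ident)
    fix i p assume ip: "i < k" "p < k"
    show "(G *v (V ! i)) $ (sl I0 ! p) = (if i = p then 1 else 0)"
      using Gv[OF ip(2)] sI0n[OF ip(2)] on[of p i] ip k_def by auto
  qed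
  finally have R: "wedge (map (\<lambda>x. G *v x) V) $ I0 = 1" .
  have minor: "mf k (\<lambda>i. column (sl J ! i) G) (\<lambda>i. sl I0 ! i) = wedge V $ J" if cJ: "card J = k" for J
  proof -
    have "mf k (\<lambda>i. column (sl J ! i) G) (\<lambda>i. sl I0 ! i) =
        (\<Sum>p | p permutes {..<k}. of_int (sign p) * (\<Prod>i<k. column (sl J ! p i) G $ sl I0 ! i))"
      by (rule mf_transpose)
    also have "\<dots> = (\<Sum>p | p permutes {..<k}. of_int (sign p) * (\<Prod>i<k. (V ! i) $ (sl J ! p i)))"
      by (intro sum.cong refl arg_cong2[where f="(*)"] prod.cong) (simp_all add: column_def sI0n Grow)
    also have "\<dots> = wedge V $ J" using cJ k_def by (simp add: wedge_nth mf_def)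
    finally show ?thesis .
  qed
  have "compound k G (wedge V) $ I0 = (\<Sum>J | card J = k. wedge V $ J * wedge V $ J)"
    using cI0 by (simp add: compound_nth) (intro sum.cong refl; simp add: minor)
  also have "\<dots> = 0" using w0 by simp
  finally have "compound k G (wedge V) $ I0 = 0" .
  moreover have "compound k G (wedge V) = wedge (map (\<lambda>x. G *v x) V)" using CB_wedge k_def by simp
  ultimately show False using R by simp
qed

definition ON :: "real^'n \<Rightarrow> (real^'n) list \<Rightarrow> bool" where
  "ON x ys \<longleftrightarrow> (\<forall>i<length ys. inner (ys ! i) x = 0) \<and>
     (\<forall>i<length ys. \<forall>k<length ys. inner (ys ! i) (ys ! k) = (if i = k then 1 else 0))"

lemma GS_aux:
  fixes x :: "real^'n::{finite,linorder}"
  assumes "x \<noteq> 0" "ON x ys" "wedge (x # ys @ zs) \<noteq> 0"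
  shows "\<exists>ys' c. length ys' = length ys + length zs \<and> c > 0 \<and>
           wedge (x # ys') = c *\<^sub>R wedge (x # ys @ zs) \<and> ON x ys'"
  using assms(2,3)
proof (induction zs arbitrary: ys)
  case Nil
  then show ?case by (intro exI[of _ ys] exI[of _ 1]) simp
next
  case (Cons z zs)
  define P where "P = x # ys"
  define a where "a = length P"
  define L where "L = P @ z # zs"
  have LL: "x # ys @ z # zs = L" unfolding L_def P_def by simp
  have aL: "a < length L" unfolding a_def L_def by simp
  have La: "L ! a = z" unfolding L_def a_def by simp
  have Lb: "L ! b = P ! b" if "b < a" for b using that unfolding L_def a_def by (simp add: nth_append)
  have Pnz: "P ! b \<noteq> 0" if "b < a" for b
  proof (cases b)
    case 0 then show ?thesis using assms(1) by (simp add: P_def)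
  next
    case (Suc i)
    then have "i < length ys" using that by (simp add: a_def P_def)
    then have "inner (ys ! i) (ys ! i) = 1" using Cons.prems(1) unfolding ON_def by simp
    then show ?thesis using Suc by (auto simp: P_def)
  qed
  have Port: "inner (P ! b) (P ! b') = 0" if bb: "b < a" "b' < a" "b \<noteq> b'" for b b'
  proof -
    have on: "inner (ys ! i) x = 0" "inner (ys ! i) (ys ! k) = (if i = k then 1 else 0)"
      if ik: "i < length ys" "k < length ys" for i k
      using Cons.prems(1) ik unfolding ON_def by auto
    show ?thesis
    proof (cases b)
      case 0
      then obtain i where "b' = Suc i" using bb by (cases b') auto
      then show ?thesis using 0 bb on[of i i] by (simp add: P_def a_def inner_commute)
    next
      case (Suc i)
      show ?thesis
      proof (cases b')
        case 0 then show ?thesis using Suc bb on[of i i] by (simp add: P_def a_def)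
      next
        case (Suc k)
        then show ?thesis using \<open>b = Suc i\<close> bb on[of i k] by (simp add: P_def a_def)
      qed
    qed
  qed
  define c where "c b = - inner z (P ! b) / inner (P ! b) (P ! b)" for b
  define z' where "z' = z + (\<Sum>b\<in>{..<a}. c b *\<^sub>R P ! b)"
  have "wedge (L[a := L ! a + (\<Sum>b\<in>{..<a}. c b *\<^sub>R L ! b)]) = wedge L"
    by (rule wedge_add_comb) (use aL in auto)
  moreover have "L ! a + (\<Sum>b\<in>{..<a}. c b *\<^sub>R L ! b) = z'"
    unfolding z'_def La using Lb by simp
  moreover have "L[a := z'] = P @ z' # zs" unfolding L_def a_def by simp
  ultimately have w1: "wedge (P @ z' # zs) = wedge L" by simp
  have z'nz: "z' \<noteq> 0"
  proof
    assume "z' = 0"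
    then have "wedge (P @ z' # zs) = 0" by (intro wedge_zero_entry[of "length P"]) auto
    then show False using w1 Cons.prems(2) LL by simp
  qed
  have z'ort: "inner z' (P ! b0) = 0" if "b0 < a" for b0
  proof -
    have "inner z' (P ! b0) = inner z (P ! b0) + (\<Sum>b\<in>{..<a}. c b * inner (P ! b) (P ! b0))"
      unfolding z'_def by (simp add: inner_add_left inner_sum_left)
    also have "(\<Sum>b\<in>{..<a}. c b * inner (P ! b) (P ! b0)) = c b0 * inner (P ! b0) (P ! b0)"
    proof -
      have "(\<Sum>b\<in>{..<a}. c b * inner (P ! b) (P ! b0)) =
          c b0 * inner (P ! b0) (P ! b0) + (\<Sum>b\<in>{..<a} - {b0}. c b * inner (P ! b) (P ! b0))"
        using that by (simp add: sum.remove)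
      moreover have "(\<Sum>b\<in>{..<a} - {b0}. c b * inner (P ! b) (P ! b0)) = 0"
        using Port that by (intro sum.neutral) auto
      ultimately show ?thesis by simp
    qed
    also have "c b0 * inner (P ! b0) (P ! b0) = - inner z (P ! b0)"
      using Pnz[OF that] unfolding c_def by simp
    finally show ?thesis by simp
  qed
  define z'' where "z'' = (1 / norm z') *\<^sub>R z'"
  have w2: "wedge (P @ z'' # zs) = (1 / norm z') *\<^sub>R wedge (P @ z' # zs)"
  proof -
    have "(P @ z' # zs)[length P := (1 / norm z') *\<^sub>R (P @ z' # zs) ! length P] = P @ z'' # zs"
      unfolding z''_def by simp
    then show ?thesis using wedge_scale_pos[of "length P" "P @ z' # zs" "1 / norm z'"] by simp
  qed
  define ys1 where "ys1 = ys @ [z'']"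
  have eq1: "x # ys1 @ zs = P @ z'' # zs" unfolding ys1_def P_def by simp
  have ON1: "ON x ys1"
  proof -
    have lys1: "length ys1 = Suc (length ys)" unfolding ys1_def by simp
    have n1: "ys1 ! i = P ! Suc i" if "i < length ys" for i using that unfolding ys1_def P_def by (simp add: nth_append)
    have n2: "ys1 ! length ys = z''" unfolding ys1_def by simp
    have aa: "a = Suc (length ys)" unfolding a_def P_def by simp
    have iz: "inner z'' (P ! b) = 0" if "b < a" for b using z'ort[OF that] unfolding z''_def by simp
    have zz: "inner z'' z'' = 1" using z'nz unfolding z''_def by (simp add: power2_norm_eq_inner[symmetric] field_simps)
    have px: "P ! 0 = x" unfolding P_def by simp
    show ?thesis unfolding ON_def
    proof (intro conjI allI impI)
      fix i assume "i < length ys1"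
      then consider "i < length ys" | "i = length ys" using lys1 by linarith
      then show "inner (ys1 ! i) x = 0"
      proof cases
        case 1 then show ?thesis using n1[OF 1] Port[of "Suc i" 0] aa px by simp
      next
        case 2 then show ?thesis using n2 iz[of 0] aa px by simp
      qed
    next
      fix i k assume ik: "i < length ys1" "k < length ys1"
      have P1: "inner (P ! Suc i) (P ! Suc k) = (if i = k then 1 else 0)" if "i < length ys" "k < length ys" for i k
        using Cons.prems(1) that unfolding ON_def P_def by simp
      consider "i < length ys" "k < length ys" | "i < length ys" "k = length ys" | "i = length ys" "k < length ys"
        | "i = length ys" "k = length ys" using ik lys1 by linarith
      then show "inner (ys1 ! i) (ys1 ! k) = (if i = k then 1 else 0)"
      proof cases
        case 1 then show ?thesis using n1 P1 by simp
      next
        case 2 then show ?thesis using n1[OF 2(1)] n2 iz[of "Suc i"] aa by (simp add: inner_commute)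
      next
        case 3 then show ?thesis using n1[OF 3(2)] n2 iz[of "Suc k"] aa by simp
      next
        case 4 then show ?thesis using n2 zz by simp
      qed
    qed
  qed
  have "wedge (x # ys1 @ zs) = (1 / norm z') *\<^sub>R wedge (x # ys @ z # zs)"
    unfolding eq1 w2 w1 LL by (rule refl)
  then have wnz: "wedge (x # ys1 @ zs) \<noteq> 0" using Cons.prems(2) z'nz by simp
  obtain ys' c' where r: "length ys' = length ys1 + length zs" "c' > 0"
      "wedge (x # ys') = c' *\<^sub>R wedge (x # ys1 @ zs)" "ON x ys'"
    using Cons.IH[OF ON1 wnz] by blast
  show ?case
  proof (intro exI[of _ ys'] exI[of _ "c' / norm z'"] conjI)
    show "length ys' = length ys + length (z # zs)" using r(1) by (simp add: ys1_def)
    show "c' / norm z' > 0" using r(2) z'nz by simp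
    show "wedge (x # ys') = (c' / norm z') *\<^sub>R wedge (x # ys @ z # zs)"
      using r(3) \<open>wedge (x # ys1 @ zs) = _\<close> by simp
    show "ON x ys'" by (rule r(4))
  qed
qed


lemma ext_interior_rint: "ext_interior j S = rint (ext_space j) S"
  unfolding ext_interior_def rint_def ..

lemma subspace_ext: "subspace (ext_space j)"
  unfolding subspace_def ext_space_def by auto

lemma eJ_ext: "eJ J \<in> ext_space (card J)"
  unfolding ext_space_def eJ_def by auto

lemma eJ_nz: "eJ J \<noteq> 0"
proof
  assume "eJ J = 0"
  then have "eJ J $ J = 0" by simp
  then show False by (simp add: eJ_def)
qed

lemma ext_nz:
  assumes "j \<le> CARD('n::{finite,linorder})"
  shows "ext_space j \<noteq> ({0} :: (real^('n set)) set)"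
proof -
  obtain J :: "'n set" where "card J = j"
    using obtain_subset_with_card_n[of j "UNIV :: 'n set"] assms by auto
  then show ?thesis using eJ_ext[of J] eJ_nz[of J] by auto
qed

lemma map_funpow_length: "length (map f xs) = length xs" by simp

locale jsetting =
  fixes A :: "((real,'n::{finite,linorder}) vec, 'n) vec" and KK :: "(real^('n set)) set"
    and e :: real and j :: nat
  assumes pc: "proper_cone j KK" and e: "e \<in> {1, -1}"
    and kp: "K_positive j KK (\<lambda>v. e *\<^sub>R compound j A v)"
    and j1: "1 \<le> j" and jn: "j \<le> CARD('n)"
begin

abbreviation "EE \<equiv> ext_space j"
definition "MM v = e *\<^sub>R compound j A v"

lemma e2: "e * e = 1" using e by auto

lemma linM: "linear MM"
  unfolding MM_def[abs_def] using linear_compound[of j A]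
  by (intro linear_compose_scale_right) (simp_all add: linear_compose_scale_right)

lemma pc_parts: "KK \<subseteq> EE" "closed KK" "convex KK" "cone KK" "KK \<inter> uminus ` KK = {0}" "rint EE KK \<noteq> {}"
  using pc unfolding proper_cone_def ext_interior_rint by auto

lemma MM_E: "MM ` EE \<subseteq> EE"
  unfolding MM_def using compound_in_ext subspace_ext subspace_scale by blast

lemma MM_pos: "MM ` (KK - {0}) \<subseteq> rint EE KK"
  using kp unfolding K_positive_def MM_def[abs_def] ext_interior_rint by simp

sublocale pc: pcone EE KK MM
  by (intro pcone.intro) (use pc_parts subspace_ext linM MM_E MM_pos ext_nz[OF jn] in simp_all)

lemma MM_wedge:
  assumes "length xs = j"
  shows "(MM^^m) (wedge xs) = (e^m) *\<^sub>R wedge (map ((\<lambda>x. A *v x)^^m) xs)"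
proof (induction m)
  case 0 then show ?case by simp
next
  case (Suc m)
  have "(MM^^Suc m) (wedge xs) = MM ((e^m) *\<^sub>R wedge (map ((\<lambda>x. A *v x)^^m) xs))"
    using Suc by simp
  also have "\<dots> = (e^m) *\<^sub>R MM (wedge (map ((\<lambda>x. A *v x)^^m) xs))"
    using linear_cmul[OF linM] by simp
  also have "MM (wedge (map ((\<lambda>x. A *v x)^^m) xs)) = e *\<^sub>R wedge (map (\<lambda>x. A *v x) (map ((\<lambda>x. A *v x)^^m) xs))"
    unfolding MM_def using CB_wedge[of "map ((\<lambda>x. A *v x)^^m) xs" A] assms by simp
  also have "map (\<lambda>x. A *v x) (map ((\<lambda>x. A *v x)^^m) xs) = map ((\<lambda>x. A *v x)^^Suc m) xs"
    by simp
  finally show ?case by (simp add: mult.commute del: funpow.simps)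
qed

definition "SS = {x. \<exists>xs. length xs = j - 1 \<and> wedge (x # xs) \<in> rint EE KK \<union> rint EE (uminus ` KK)}"

lemma rint_negK: "rint EE (uminus ` KK) = uminus ` rint EE KK"
  by (rule rint_neg[OF subspace_ext])

lemma RR_scale:
  assumes "w \<in> rint EE KK \<union> rint EE (uminus ` KK)" "c \<noteq> 0"
  shows "c *\<^sub>R w \<in> rint EE KK \<union> rint EE (uminus ` KK)"
proof (cases "c > 0")
  case True
  show ?thesis
  proof (cases "w \<in> rint EE KK")
    case True then show ?thesis using rint_scale[OF subspace_ext pc.cnK _ \<open>c > 0\<close>] by blast
  next
    case False
    then have "-w \<in> rint EE KK" using assms(1) rint_negK by (auto simp: image_iff)
    then have "c *\<^sub>R (-w) \<in> rint EE KK" using rint_scale[OF subspace_ext pc.cnK _ \<open>c > 0\<close>] by blast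
    then have "c *\<^sub>R w \<in> uminus ` rint EE KK" by (metis image_eqI minus_minus scaleR_minus_right)
    then show ?thesis using rint_negK by blast
  qed
next
  case False
  then have c: "-c > 0" using assms(2) by simp
  show ?thesis
  proof (cases "w \<in> rint EE KK")
    case True
    then have "(-c) *\<^sub>R w \<in> rint EE KK" using rint_scale[OF subspace_ext pc.cnK _ c] by blast
    then have "c *\<^sub>R w \<in> uminus ` rint EE KK" by (metis image_eqI minus_minus scaleR_minus_left)
    then show ?thesis using rint_negK by blast
  next
    case False
    then have "-w \<in> rint EE KK" using assms(1) rint_negK by (auto simp: image_iff)
    then have "(-c) *\<^sub>R (-w) \<in> rint EE KK" using rint_scale[OF subspace_ext pc.cnK _ c] by blast
    then show ?thesis by simp
  qed
qed

lemma SS_open: "open SS"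
  unfolding open_dist
proof (intro ballI)
  fix x assume "x \<in> SS"
  then obtain xs where xs: "length xs = j - 1" "wedge (x # xs) \<in> rint EE KK \<union> rint EE (uminus ` KK)"
    unfolding SS_def by blast
  have lenj: "length (x # xs) = j" using xs j1 by simp
  define f where "f y = wedge (y # xs)" for y
  have bl: "bounded_linear f" unfolding f_def[abs_def] using linear_wedge_hd linear_conv_bounded_linear by blast
  obtain C where C: "C > 0" "\<And>v. norm (f v) \<le> norm v * C" using bounded_linear.pos_bounded[OF bl] by blast
  obtain r where r: "r > 0" "\<forall>y\<in>EE. dist y (f x) < r \<longrightarrow> y \<in> rint EE KK \<union> rint EE (uminus ` KK)"
  proof (cases "f x \<in> rint EE KK")
    case True
    then show ?thesis using rint_open that by blast
  next
    case False
    then have "f x \<in> rint EE (uminus ` KK)" using xs unfolding f_def by blast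
    then show ?thesis using rint_open that by blast
  qed
  have fE: "f y \<in> EE" for y using wedge_in_ext[of "y # xs"] lenj unfolding f_def by simp
  show "\<exists>d>0. \<forall>y. dist y x < d \<longrightarrow> y \<in> SS"
  proof (intro exI[of _ "r / C"] conjI allI impI)
    show "r / C > 0" using r C by simp
    fix y assume "dist y x < r / C"
    then have "norm (y - x) * C < r" using C by (simp add: dist_norm field_simps)
    moreover have "f y - f x = f (y - x)" using bl by (simp add: linear_diff linear_conv_bounded_linear)
    ultimately have "dist (f y) (f x) < r" using C(2)[of "y - x"] by (simp add: dist_norm)
    then have "f y \<in> rint EE KK \<union> rint EE (uminus ` KK)" using r fE by blast
    then show "y \<in> SS" unfolding SS_def f_def using xs by blast
  qed
qed

lemma SS_step:
  assumes "length ys = j - 1" "wedge (x # ys) \<in> (KK \<union> uminus ` KK) - {0}"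
  shows "A *v x \<in> SS"
proof -
  define w where "w = wedge (x # ys)"
  have lenj: "length (x # ys) = j" using assms j1 by simp
  have Mw: "MM w = e *\<^sub>R wedge ((A *v x) # map (\<lambda>v. A *v v) ys)"
    unfolding MM_def w_def using CB_wedge[of "x # ys" A] lenj by simp
  have "MM w \<in> rint EE KK \<union> rint EE (uminus ` KK)"
  proof (cases "w \<in> KK")
    case True
    then show ?thesis using MM_pos assms(2) unfolding w_def by blast
  next
    case False
    then have "-w \<in> KK" "-w \<noteq> 0" using assms(2) unfolding w_def by (auto simp: image_iff)
    then have "MM (-w) \<in> rint EE KK" using MM_pos by blast
    then have "- MM w \<in> rint EE KK" using linear_neg[OF linM] by simp
    then have "MM w \<in> uminus ` rint EE KK" by (metis image_eqI minus_minus)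
    then show ?thesis using rint_negK by blast
  qed
  moreover have "e \<noteq> 0" using e by auto
  ultimately have "e *\<^sub>R MM w \<in> rint EE KK \<union> rint EE (uminus ` KK)"
    by (rule RR_scale)
  moreover have "e *\<^sub>R MM w = wedge ((A *v x) # map (\<lambda>v. A *v v) ys)"
    using Mw e2 by simp
  ultimately have "wedge ((A *v x) # map (\<lambda>v. A *v v) ys) \<in> rint EE KK \<union> rint EE (uminus ` KK)"
    by simp
  then show ?thesis unfolding SS_def using assms(1) by (intro CollectI exI[of _ "map (\<lambda>v. A *v v) ys"]) simp
qed

lemma RR_open:
  assumes "y \<in> rint EE KK \<union> rint EE (uminus ` KK)"
  shows "\<exists>r>0. \<forall>z\<in>EE. dist z y < r \<longrightarrow> z \<in> rint EE KK \<union> rint EE (uminus ` KK)"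
proof (cases "y \<in> rint EE KK")
  case True
  then show ?thesis using rint_open by blast
next
  case False
  then have "y \<in> rint EE (uminus ` KK)" using assms by blast
  then show ?thesis using rint_open by blast
qed

lemma SS_ne: "SS \<noteq> {}"
proof -
  obtain u \<rho> where u: "u \<in> rint EE KK" "\<rho> > 0" "MM u = \<rho> *\<^sub>R u" using pc.perron by blast
  interpret pu: pcone_u EE KK MM u \<rho> by unfold_locales (use u in auto)
  have Nm: "(pu.N^^m) w = (1/\<rho>^m) *\<^sub>R (MM^^m) w" for m w
  proof (induction m)
    case (Suc m)
    have "(pu.N^^Suc m) w = pu.N ((pu.N^^m) w)" by simp
    also have "\<dots> = (1/\<rho>) *\<^sub>R MM ((1/\<rho>^m) *\<^sub>R (MM^^m) w)" unfolding Suc pu.N_def ..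
    also have "\<dots> = (1/\<rho>^Suc m) *\<^sub>R (MM^^Suc m) w" using linear_cmul[OF linM] by simp
    finally show ?case .
  qed simp
  have "\<exists>J c. card J = j \<and> c \<noteq> 0 \<and> (\<lambda>m. (pu.N^^m) (eJ J)) \<longlonglongrightarrow> c *\<^sub>R u"
  proof (rule ccontr)
    assume nc: "\<not> ?thesis"
    have z: "(\<lambda>m. (pu.N^^m) (eJ J)) \<longlonglongrightarrow> 0" if cJ: "card J = j" for J
    proof -
      obtain c where c: "(\<lambda>m. (pu.N^^m) (eJ J)) \<longlonglongrightarrow> c *\<^sub>R u"
        using pu.conv_E[of "eJ J"] eJ_ext[of J] cJ by auto
      then have "c = 0" using nc cJ by blast
      then show ?thesis using c by simp
    qed
    have uE: "u \<in> EE" using pu.uK by blast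
    have "(pu.N^^m) u = (\<Sum>J | card J = j. u $ J *\<^sub>R (pu.N^^m) (eJ J))" for m
    proof -
      have "(pu.N^^m) u = (pu.N^^m) (\<Sum>J | card J = j. u $ J *\<^sub>R eJ J)"
        using ext_space_sum_eJ[OF uE] by simp
      also have "\<dots> = (\<Sum>J | card J = j. u $ J *\<^sub>R (pu.N^^m) (eJ J))"
        unfolding linear_sum[OF pu.linNm] linear_cmul[OF pu.linNm] ..
      finally show ?thesis .
    qed
    moreover have "(\<lambda>m. \<Sum>J | card J = j. u $ J *\<^sub>R (pu.N^^m) (eJ J)) \<longlonglongrightarrow> (\<Sum>J | card J = j. u $ J *\<^sub>R 0)"
      by (intro tendsto_sum tendsto_scaleR tendsto_const z) simp
    ultimately have "(\<lambda>m. (pu.N^^m) u) \<longlonglongrightarrow> 0" by simp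
    then have "(\<lambda>m. u) \<longlonglongrightarrow> 0" using pu.Nmu by simp
    then have "u = 0" using LIMSEQ_const_iff by blast
    then show False using pu.uK by simp
  qed
  then obtain J c where J: "card J = j" "c \<noteq> 0" "(\<lambda>m. (pu.N^^m) (eJ J)) \<longlonglongrightarrow> c *\<^sub>R u" by blast
  have cu: "c *\<^sub>R u \<in> rint EE KK \<union> rint EE (uminus ` KK)" using RR_scale[OF _ J(2)] u by blast
  obtain r where r: "r > 0" "\<forall>z\<in>EE. dist z (c *\<^sub>R u) < r \<longrightarrow> z \<in> rint EE KK \<union> rint EE (uminus ` KK)"
    using RR_open[OF cu] by blast
  have "\<forall>\<^sub>F m in sequentially. dist ((pu.N^^m) (eJ J)) (c *\<^sub>R u) < r" using J(3) r(1) by (rule tendstoD)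
  then obtain m0 where "\<forall>m\<ge>m0. dist ((pu.N^^m) (eJ J)) (c *\<^sub>R u) < r" unfolding eventually_sequentially by blast
  then have "dist ((pu.N^^m0) (eJ J)) (c *\<^sub>R u) < r" by simp
  moreover have "(pu.N^^m0) (eJ J) \<in> EE" using pu.NmE eJ_ext[of J] J(1) by simp
  ultimately have inR: "(pu.N^^m0) (eJ J) \<in> rint EE KK \<union> rint EE (uminus ` KK)" using r by blast
  define bl where "bl = map (\<lambda>k. axis k (1::real)) (sl J)"
  define L where "L = map ((\<lambda>x. A *v x)^^m0) bl"
  have lbl: "length bl = j" using J(1) by (simp add: bl_def)
  have lL: "length L = j" using lbl by (simp add: L_def)
  have em: "e^m0 * e^m0 = 1" using e2 by (simp add: power_mult_distrib[symmetric])
  have "(pu.N^^m0) (eJ J) = (1/\<rho>^m0) *\<^sub>R ((e^m0) *\<^sub>R wedge L)"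
    unfolding Nm L_def using MM_wedge[OF lbl, of m0] wedge_basis[of J] by (simp add: bl_def)
  then have "(\<rho>^m0 * e^m0) *\<^sub>R (pu.N^^m0) (eJ J) = wedge L"
    using u(2) em by (simp add: scaleR_scaleR)
  moreover have "\<rho>^m0 * e^m0 \<noteq> 0" using u(2) e by auto
  ultimately have "wedge L \<in> rint EE KK \<union> rint EE (uminus ` KK)" using RR_scale[OF inR] by metis
  moreover have "L = hd L # tl L" using lL j1 by (cases L) auto
  ultimately have "wedge (hd L # tl L) \<in> rint EE KK \<union> rint EE (uminus ` KK)" by simp
  moreover have "length (tl L) = j - 1" using lL by simp
  ultimately have "hd L \<in> SS" unfolding SS_def by blast
  then show ?thesis by blast
qed

end


lemma wedge_single: "wedge [x] $ {i} = x $ i"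
proof -
  have "{p. p permutes {..<Suc 0}} = {id}" by (auto simp: lessThan_Suc)
  then show ?thesis by (simp add: wedge_nth mf_def)
qed

lemma wedge_single_nz: "x \<noteq> 0 \<Longrightarrow> wedge [x] \<noteq> 0"
  by (metis vec_eq_iff wedge_single zero_index)

context jsetting begin

lemma closure_step:
  assumes j2: "2 \<le> j" and xc: "x \<in> closure SS" and x0: "x \<noteq> 0"
  shows "\<exists>ys. length ys = j - 1 \<and> wedge (x # ys) \<in> (KK \<union> uminus ` KK) - {0}"
proof -
  let ?R = "rint EE KK \<union> rint EE (uminus ` KK)"
  obtain xs where xs: "\<And>m. xs m \<in> SS" "xs \<longlonglongrightarrow> x" using closure_sequential xc by blast
  have "\<forall>m. \<exists>zs. length zs = j - 1 \<and> wedge (xs m # zs) \<in> ?R" using xs(1) unfolding SS_def by blast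
  then obtain zs where zs: "\<And>m. length (zs m) = j - 1" "\<And>m. wedge (xs m # zs m) \<in> ?R" by metis
  have Rsub: "w \<in> (KK \<union> uminus ` KK) - {0}" if "w \<in> ?R" for w
  proof -
    have z1: "0 \<notin> rint EE KK" by (rule pc.zero_notin)
    then have z2: "0 \<notin> rint EE (uminus ` KK)" using rint_negK by (auto simp: image_iff)
    have "w \<noteq> 0" using z1 z2 that by blast
    moreover have "w \<in> KK \<union> uminus ` KK" using that rint_subset by blast
    ultimately show ?thesis by blast
  qed
  have "\<forall>m. \<exists>ys c. length ys = j - 1 \<and> c > 0 \<and> wedge (xs m # ys) = c *\<^sub>R wedge (xs m # zs m) \<and> ON (xs m) ys"
  proof
    fix m
    have wnz: "wedge (xs m # [] @ zs m) \<noteq> 0" using Rsub[OF zs(2)[of m]] by simp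
    have "xs m \<noteq> 0"
    proof
      assume "xs m = 0"
      then have "wedge (xs m # zs m) = 0" by (intro wedge_zero_entry[of 0]) auto
      then show False using wnz by simp
    qed
    moreover have "ON (xs m) []" by (simp add: ON_def)
    ultimately show "\<exists>ys c. length ys = j - 1 \<and> c > 0 \<and> wedge (xs m # ys) = c *\<^sub>R wedge (xs m # zs m) \<and> ON (xs m) ys"
      using GS_aux[of "xs m" "[]" "zs m"] wnz zs(1)[of m] by auto
  qed
  then obtain ys c where yc: "\<And>m. length (ys m) = j - 1" "\<And>m. c m > 0"
    "\<And>m. wedge (xs m # ys m) = c m *\<^sub>R wedge (xs m # zs m)" "\<And>m. ON (xs m) (ys m)" by metis
  have wK: "wedge (xs m # ys m) \<in> KK \<union> uminus ` KK" for m
  proof -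
    have w: "wedge (xs m # zs m) \<in> KK \<union> uminus ` KK" using Rsub[OF zs(2)[of m]] by blast
    show ?thesis
    proof (cases "wedge (xs m # zs m) \<in> KK")
      case True then show ?thesis using yc(2,3)[of m] pc.Kscale[of _ "c m"] by simp
    next
      case False
      then obtain v where v: "v \<in> KK" "wedge (xs m # zs m) = - v" using w by auto
      then have "c m *\<^sub>R v \<in> KK" using yc(2)[of m] pc.Kscale by simp
      moreover have "wedge (xs m # ys m) = - (c m *\<^sub>R v)" using yc(3)[of m] v by simp
      ultimately show ?thesis by blast
    qed
  qed
  have nrm: "norm (ys m ! i) \<le> 1" if "i < j - 1" for m i
  proof -
    have "inner (ys m ! i) (ys m ! i) = 1" using yc(4)[of m] yc(1)[of m] that unfolding ON_def by simp
    then show ?thesis by (simp add: norm_eq_sqrt_inner)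
  qed
  obtain \<sigma> yl where sl: "strict_mono \<sigma>" "length yl = j - 1" "\<forall>i<j - 1. (\<lambda>m. ys (\<sigma> m) ! i) \<longlonglongrightarrow> yl ! i"
    using seq_lists[of ys "j - 1" 1] yc(1) nrm by blast
  have xs\<sigma>: "(\<lambda>m. xs (\<sigma> m)) \<longlonglongrightarrow> x" using LIMSEQ_subseq_LIMSEQ[OF xs(2) sl(1)] by (simp add: o_def)
  have conv: "(\<lambda>m. (xs (\<sigma> m) # ys (\<sigma> m)) ! i) \<longlonglongrightarrow> (x # yl) ! i" if "i < j" for i
  proof (cases i)
    case 0 then show ?thesis using xs\<sigma> by simp
  next
    case (Suc i') then show ?thesis using sl(3) that by simp
  qed
  have lj: "length (xs (\<sigma> m) # ys (\<sigma> m)) = j" for m using yc(1) j2 by simp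
  have lj2: "length (x # yl) = j" using sl(2) j2 by simp
  have wt: "(\<lambda>m. wedge (xs (\<sigma> m) # ys (\<sigma> m))) \<longlonglongrightarrow> wedge (x # yl)"
    by (rule wedge_tendsto[OF lj lj2 conv])
  have clKK: "closed (KK \<union> uminus ` KK)" using pc.clK by (intro closed_Un closed_negations) auto
  have wKl: "wedge (x # yl) \<in> KK \<union> uminus ` KK" using closed_sequentially[OF clKK _ wt] wK by blast
  have ONl: "inner (yl ! i) x = 0" "inner (yl ! i) (yl ! k) = (if i = k then 1 else 0)"
    if "i < j - 1" "k < j - 1" for i k
  proof -
    have yi: "(\<lambda>m. ys (\<sigma> m) ! i) \<longlonglongrightarrow> yl ! i" "(\<lambda>m. ys (\<sigma> m) ! k) \<longlonglongrightarrow> yl ! k" using sl(3) that by auto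
    have "(\<lambda>m. inner (ys (\<sigma> m) ! i) (xs (\<sigma> m))) \<longlonglongrightarrow> inner (yl ! i) x"
      by (intro tendsto_inner yi xs\<sigma>)
    moreover have "inner (ys (\<sigma> m) ! i) (xs (\<sigma> m)) = 0" for m
      using yc(4)[of "\<sigma> m"] yc(1)[of "\<sigma> m"] that unfolding ON_def by simp
    ultimately show "inner (yl ! i) x = 0" using LIMSEQ_unique[OF _ tendsto_const] by simp
    have "(\<lambda>m. inner (ys (\<sigma> m) ! i) (ys (\<sigma> m) ! k)) \<longlonglongrightarrow> inner (yl ! i) (yl ! k)"
      by (intro tendsto_inner yi)
    moreover have "inner (ys (\<sigma> m) ! i) (ys (\<sigma> m) ! k) = (if i = k then 1 else 0)" for m
      using yc(4)[of "\<sigma> m"] yc(1)[of "\<sigma> m"] that unfolding ON_def by simp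
    ultimately have "(\<lambda>m. if i = k then 1 else 0::real) \<longlonglongrightarrow> inner (yl ! i) (yl ! k)" by simp
    then have "(if i = k then 1 else 0::real) = inner (yl ! i) (yl ! k)" by (rule LIMSEQ_const_iff[THEN iffD1])
    then show "inner (yl ! i) (yl ! k) = (if i = k then 1 else 0)" by simp
  qed
  define V where "V = ((1 / norm x) *\<^sub>R x) # yl"
  have lV: "length V = j" using sl(2) j2 by (simp add: V_def)
  have "wedge V \<noteq> 0"
  proof (rule wedge_orthonormal_nz)
    show "length V \<le> CARD('n)" using lV jn by simp
    fix i k assume ik: "i < length V" "k < length V"
    show "inner (V ! i) (V ! k) = (if i = k then 1 else 0)"
    proof (cases i; cases k)
      assume "i = 0" "k = 0"
      then show ?thesis using x0 by (simp add: V_def power2_norm_eq_inner[symmetric] field_simps)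
    next
      fix k' assume "i = 0" "k = Suc k'"
      then show ?thesis using ONl[of k' k'] ik lV by (simp add: V_def inner_commute)
    next
      fix i' assume "i = Suc i'" "k = 0"
      then show ?thesis using ONl[of i' i'] ik lV by (simp add: V_def)
    next
      fix i' k' assume "i = Suc i'" "k = Suc k'"
      then show ?thesis using ONl[of i' k'] ik lV by (simp add: V_def)
    qed
  qed
  moreover have "wedge (x # yl) = norm x *\<^sub>R wedge V"
  proof -
    have "V[0 := norm x *\<^sub>R V ! 0] = x # yl" using x0 by (simp add: V_def)
    then show ?thesis using wedge_scale_pos[of 0 V "norm x"] lV j2 by simp
  qed
  ultimately have "wedge (x # yl) \<noteq> 0" using x0 by simp
  then show ?thesis using wKl sl(2) by blast
qed

end

theorem theorem25:
  fixes A :: "((real,'n::{finite,linorder}) vec, 'n) vec"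
    and K :: "nat \<Rightarrow> ((real,'n set) vec) set"
  assumes "totally_positive_structure K"
    and "GSSR A K"
  shows "\<forall>j\<in>{1..CARD('n)}. interior (T_cone K j) \<noteq> {} \<and>
           (\<lambda>x. A *v x) ` (T_cone K j - {0}) \<subseteq> interior (T_cone K j)"
proof
  fix j assume j: "j \<in> {1..CARD('n)}"
  obtain \<epsilon> where eps: "\<forall>j\<in>{1..CARD('n)}. \<epsilon> j \<in> {1, -1} \<and>
      K_positive j (K j) (\<lambda>v. \<epsilon> j *\<^sub>R compound j A v)"
    using assms(2) unfolding GSSR_def by blast
  interpret js: jsetting A "K j" "\<epsilon> j" j
    using assms(1) eps j unfolding totally_positive_structure_def by unfold_locales auto
  have SST: "js.SS \<subseteq> T_cone K j"
  proof (cases "j = 1")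
    case True
    show ?thesis
    proof
      fix x assume "x \<in> js.SS"
      then obtain xs where "length xs = 0" "wedge (x # xs) \<in> rint js.EE (K j) \<union> rint js.EE (uminus ` K j)"
        unfolding js.SS_def using True by auto
      then have "wedge [x] \<in> K j \<union> uminus ` K j" using rint_subset by auto
      then show "x \<in> T_cone K j" using True unfolding T_cone_def by simp
    qed
  next
    case False
    have "T_cone K j = closure js.SS"
      using False unfolding T_cone_def js.SS_def ext_interior_rint by simp
    then show ?thesis using closure_subset by blast
  qed
  have SSI: "js.SS \<subseteq> interior (T_cone K j)" using interior_maximal[OF SST js.SS_open] .
  show "interior (T_cone K j) \<noteq> {} \<and> (\<lambda>x. A *v x) ` (T_cone K j - {0}) \<subseteq> interior (T_cone K j)"
  proof
    show "interior (T_cone K j) \<noteq> {}" using SSI js.SS_ne by blast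
    show "(\<lambda>x. A *v x) ` (T_cone K j - {0}) \<subseteq> interior (T_cone K j)"
    proof
      fix y assume "y \<in> (\<lambda>x. A *v x) ` (T_cone K j - {0})"
      then obtain x where x: "x \<in> T_cone K j" "x \<noteq> 0" "y = A *v x" by blast
      have "A *v x \<in> js.SS"
      proof (cases "j = 1")
        case True
        then have "wedge [x] \<in> K j \<union> uminus ` K j" using x unfolding T_cone_def by simp
        then have "wedge (x # []) \<in> (K j \<union> uminus ` K j) - {0}" using wedge_single_nz[OF x(2)] by simp
        then show ?thesis using js.SS_step[of "[]" x] True by simp
      next
        case False
        then have "2 \<le> j" using j by simp
        have "T_cone K j = closure js.SS"
          using False unfolding T_cone_def js.SS_def ext_interior_rint by simp
        then obtain ys where "length ys = j - 1" "wedge (x # ys) \<in> (K j \<union> uminus ` K j) - {0}"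
          using js.closure_step[OF \<open>2 \<le> j\<close> _ x(2)] x(1) by blast
        then show ?thesis using js.SS_step by blast
      qed
      then show "y \<in> interior (T_cone K j)" using SSI x by blast
    qed
  qed
qed

end
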